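(* Let $r\ge 2$ be an integer and let $H$ be a graph with chromatic number $\chi(H)=r+1$. For each $n$, let $ex_{\mu_r}(n,H)$ denote the maximum of the $r$-clique spectral radius $\mu_r(G)$ over all $H$-free simple graphs $G$ on $n$ vertices. Then, as $n\to\infty$, \[ ex_{\mu_{r}}(n,H)=\left(\frac{1}{r^{r-1}}+o(1)\right)n^{r-1}. \]
   Context: All graphs are simple and undirected. A $t$-clique of a graph $G$ is a set of $t$ vertices inducing a complete subgraph; $C_t(G)$ denotes the set of $t$-cliques of $G$. For a graph $G$ with vertex set $\{1,\dots,n\}$, the $t$-clique tensor $\mathcal{A}(G)=(a_{i_1\cdots i_t})$ is the order $t$, dimension $n$ tensor with $a_{i_1 i_2\cdots i_t}=\frac{1}{(t-1)!}$ if $\{i_1,\dots,i_t\}\in C_t(G)$ (in particular the $i_j$ are distinct) and $a_{i_1\cdots i_t}=0$ otherwise. For an order $m$ dimension $n$ tensor $\mathcal{A}$ and $x\in\mathbb{C}^n$, $\mathcal{A}x^{m-1}$ is the vector whose $i$-th component is $\sum_{i_2,\dots,i_m=1}^n a_{i i_2\cdots i_m}x_{i_2}\cdots x_{i_m}$; $\lambda\in\mathbb{C}$ is an eigenvalue of $\mathcal{A}$ if there is a nonzero $x\in\mathbb{C}^n$ with $\mathcal{A}x^{m-1}=\lambda x^{[m-1]}$, where $x^{[m-1]}=(x_1^{m-1},\dots,x_n^{m-1})^T$. The $t$-clique spectral radius $\mu_t(G)$ is the largest modulus of an eigenvalue of the $t$-clique tensor of $G$. A graph is $H$-free if it contains no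 subgraph isomorphic to $H$. *)

theory Defs
  imports Complex_Main
begin

definition simple_graph :: "'a set \<Rightarrow> ('a \<Rightarrow> 'a \<Rightarrow> bool) \<Rightarrow> bool" where
  "simple_graph V E \<longleftrightarrow> finite V \<and> (\<forall>u v. E u v \<longrightarrow> u \<in> V \<and> v \<in> V \<and> u \<noteq> v \<and> E v u)"

definition proper_colouring :: "'a set \<Rightarrow> ('a \<Rightarrow> 'a \<Rightarrow> bool) \<Rightarrow> nat \<Rightarrow> ('a \<Rightarrow> nat) \<Rightarrow> bool" where
  "proper_colouring V E c f \<longleftrightarrow> (\<forall>v\<in>V. f v < c) \<and> (\<forall>u\<in>V. \<forall>v\<in>V. E u v \<longrightarrow> f u \<noteq> f v)"

definition chromatic_number :: "'a set \<Rightarrow> ('a \<Rightarrow> 'a \<Rightarrow> bool) \<Rightarrow> nat" where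
  "chromatic_number V E = (LEAST c. \<exists>f. proper_colouring V E c f)"

definition contains_subgraph :: "nat \<Rightarrow> (nat \<Rightarrow> nat \<Rightarrow> bool) \<Rightarrow> 'a set \<Rightarrow> ('a \<Rightarrow> 'a \<Rightarrow> bool) \<Rightarrow> bool" where
  "contains_subgraph n E VH EH \<longleftrightarrow>
     (\<exists>\<phi>. inj_on \<phi> VH \<and> \<phi> ` VH \<subseteq> {0..<n} \<and> (\<forall>u\<in>VH. \<forall>v\<in>VH. EH u v \<longrightarrow> E (\<phi> u) (\<phi> v)))"

definition H_free :: "nat \<Rightarrow> (nat \<Rightarrow> nat \<Rightarrow> bool) \<Rightarrow> 'a set \<Rightarrow> ('a \<Rightarrow> 'a \<Rightarrow> bool) \<Rightarrow> bool" where
  "H_free n E VH EH \<longleftrightarrow> \<not> contains_subgraph n E VH EH"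

definition is_clique :: "nat \<Rightarrow> (nat \<Rightarrow> nat \<Rightarrow> bool) \<Rightarrow> nat \<Rightarrow> nat set \<Rightarrow> bool" where
  "is_clique n E t S \<longleftrightarrow> S \<subseteq> {0..<n} \<and> card S = t \<and> (\<forall>u\<in>S. \<forall>v\<in>S. u \<noteq> v \<longrightarrow> E u v)"

definition clique_tensor :: "nat \<Rightarrow> (nat \<Rightarrow> nat \<Rightarrow> bool) \<Rightarrow> nat \<Rightarrow> nat list \<Rightarrow> real" where
  "clique_tensor n E t is =
     (if distinct is \<and> is_clique n E t (set is) then 1 / fact (t - 1) else 0)"

text \<open>(A x^{t-1})_i, summing over all (i_2,...,i_t) in [n]^{t-1}.\<close>
definition tensor_apply :: "nat \<Rightarrow> (nat \<Rightarrow> nat \<Rightarrow> bool) \<Rightarrow> nat \<Rightarrow> (nat \<Rightarrow> complex) \<Rightarrow> nat \<Rightarrow> complex" where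
  "tensor_apply n E t x i =
     (\<Sum>js \<in> {js. length js = t - 1 \<and> set js \<subseteq> {0..<n}}.
        complex_of_real (clique_tensor n E t (i # js)) * (\<Prod>j\<leftarrow>js. x j))"

definition clique_eigenvalue :: "nat \<Rightarrow> (nat \<Rightarrow> nat \<Rightarrow> bool) \<Rightarrow> nat \<Rightarrow> complex \<Rightarrow> bool" where
  "clique_eigenvalue n E t mu \<longleftrightarrow>
     (\<exists>x :: nat \<Rightarrow> complex. (\<exists>i<n. x i \<noteq> 0) \<and>
        (\<forall>i<n. tensor_apply n E t x i = mu * x i ^ (t - 1)))"

definition clique_spectral_radius :: "nat \<Rightarrow> (nat \<Rightarrow> nat \<Rightarrow> bool) \<Rightarrow> nat \<Rightarrow> real" where
  "clique_spectral_radius n E t = Sup (cmod ` {mu. clique_eigenvalue n E t mu})"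

definition ex_mu :: "nat \<Rightarrow> nat \<Rightarrow> 'a set \<Rightarrow> ('a \<Rightarrow> 'a \<Rightarrow> bool) \<Rightarrow> real" where
  "ex_mu r n VH EH = Sup {clique_spectral_radius n E r | E.
      simple_graph {0..<n} E \<and> H_free n E VH EH}"

end

theory Submission
  imports Defs "HOL-Analysis.Analysis" "HOL-Combinatorics.Multiset_Permutations"
begin

lemma convex_pow_nonneg: "convex_on {0::real..} (\<lambda>x. x^t)"
proof (cases "even t")
  case True
  then show ?thesis using convex_power_even convex_on_subset by blast
next
  case False
  then show ?thesis using convex_power_odd by blast
qed

lemma power_mean:
  fixes a :: "'b \<Rightarrow> real"
  assumes "finite I" "\<And>i. i\<in>I \<Longrightarrow> a i \<ge> 0" "t \<ge> 1"
  shows "(\<Sum>i\<in>I. a i)^t \<le> real (card I)^(t-1) * (\<Sum>i\<in>I. a i^t)"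
proof (cases "I = {}")
  case True then show ?thesis using assms by (simp add: power_0_left)
next
  case False
  have c: "real (card I) > 0" using False assms by auto
  have s1: "(\<Sum>i\<in>I. 1 / real (card I)) = 1" using c by simp
  have "(\<Sum>i\<in>I. (1/card I) *\<^sub>R a i)^t \<le> (\<Sum>i\<in>I. (1/card I) * (a i)^t)"
    by (rule convex_on_sum[OF assms(1) False convex_pow_nonneg[of t] s1]) (use assms c in auto)
  moreover have "(\<Sum>i\<in>I. (1/card I) *\<^sub>R a i) = (\<Sum>i\<in>I. a i) / card I"
    by (simp add: sum_divide_distrib)
  moreover have "(\<Sum>i\<in>I. (1/card I) * (a i)^t) = (\<Sum>i\<in>I. a i^t) / card I"
    by (simp add: sum_divide_distrib)
  ultimately have "((\<Sum>i\<in>I. a i) / card I)^t \<le> (\<Sum>i\<in>I. a i^t) / card I" by simp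
  then have "(\<Sum>i\<in>I. a i)^t / real (card I) ^ t \<le> (\<Sum>i\<in>I. a i^t) / card I"
    by (simp only: power_divide)
  then have "(\<Sum>i\<in>I. a i)^t \<le> (\<Sum>i\<in>I. a i^t) / card I * real (card I) ^ t"
    using c by (simp add: divide_le_eq)
  also have "\<dots> = real (card I)^(t-1) * (\<Sum>i\<in>I. a i^t)"
  proof -
    obtain t' where t: "t = Suc t'" using assms(3) by (cases t) auto
    show ?thesis using c unfolding t by simp
  qed
  finally show ?thesis .
qed

lemma amgm:
  fixes x :: "'b \<Rightarrow> real"
  assumes "finite S" "card S = k" "k > 0" "\<And>i. i\<in>S \<Longrightarrow> x i \<ge> 0"
  shows "(\<Prod>i\<in>S. x i) \<le> ((\<Sum>i\<in>S. x i) / k)^k"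
proof -
  have ne: "S \<noteq> {}" using assms by auto
  have p0: "(\<Prod>i\<in>S. x i) \<ge> 0" using assms by (simp add: prod_nonneg)
  have "(\<Prod>i\<in>S. x i) powr (1 / k) \<le> (\<Sum>i\<in>S. x i / k)"
    using arith_geom_mean[OF assms(1) ne, of x] assms by simp
  then have "((\<Prod>i\<in>S. x i) powr (1 / k))^k \<le> (\<Sum>i\<in>S. x i / k)^k"
    by (intro power_mono) auto
  moreover have "((\<Prod>i\<in>S. x i) powr (1 / k))^k = (\<Prod>i\<in>S. x i)"
  proof (cases "(\<Prod>i\<in>S. x i) = 0")
    case True then show ?thesis using assms(3) by simp
  next
    case False
    then have pp: "(\<Prod>i\<in>S. x i) powr (1 / k) > 0" using p0 by simp
    have "((\<Prod>i\<in>S. x i) powr (1 / k))^k = ((\<Prod>i\<in>S. x i) powr (1 / k)) powr k"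
      using powr_realpow[OF pp, of k] by simp
    also have "\<dots> = (\<Prod>i\<in>S. x i)" using assms(3) False p0 by (simp add: powr_powr)
    finally show ?thesis .
  qed
  ultimately show ?thesis by (simp add: sum_divide_distrib)
qed

definition ksub :: "'b set \<Rightarrow> nat \<Rightarrow> 'b set set" where
  "ksub W k = {S. S \<subseteq> W \<and> card S = k}"

definition esym :: "'b set \<Rightarrow> nat \<Rightarrow> ('b \<Rightarrow> real) \<Rightarrow> real" where
  "esym W k w = (\<Sum>S\<in>ksub W k. \<Prod>i\<in>S. w i)"

lemma finite_ksub[simp]: "finite W \<Longrightarrow> finite (ksub W k)"
  unfolding ksub_def by (rule finite_subset[of _ "Pow W"]) auto

lemma dcount:
  fixes f :: "'b \<Rightarrow> 'b set \<Rightarrow> real"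
  assumes W: "finite W"
  shows "(\<Sum>S\<in>ksub W (Suc k). \<Sum>v\<in>S. f v (S - {v})) = (\<Sum>v\<in>W. \<Sum>T\<in>ksub (W - {v}) k. f v T)"
proof -
  have fin1: "\<And>S. S \<in> ksub W (Suc k) \<Longrightarrow> finite S" using W unfolding ksub_def by (auto intro: finite_subset)
  have "(\<Sum>S\<in>ksub W (Suc k). \<Sum>v\<in>S. f v (S - {v})) = (\<Sum>(S,v)\<in>Sigma (ksub W (Suc k)) (\<lambda>S. S). f v (S - {v}))"
    by (rule sum.Sigma) (use W fin1 in auto)
  also have "\<dots> = (\<Sum>(v,T)\<in>Sigma W (\<lambda>v. ksub (W - {v}) k). f v T)"
  proof (rule sum.reindex_bij_witness[of _ "\<lambda>(v,T). (insert v T, v)" "\<lambda>(S,v). (v, S - {v})"])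
    fix a assume "a \<in> Sigma W (\<lambda>v. ksub (W - {v}) k)"
    then show "(case (case a of (v, T) \<Rightarrow> (insert v T, v)) of (S, v) \<Rightarrow> (v, S - {v})) = a"
      unfolding ksub_def by (cases a) auto
  next
    fix a assume a: "a \<in> Sigma W (\<lambda>v. ksub (W - {v}) k)"
    obtain v T where [simp]: "a = (v,T)" by (cases a)
    have "finite T" using a W unfolding ksub_def by (auto intro: finite_subset)
    then show "(case a of (v, T) \<Rightarrow> (insert v T, v)) \<in> Sigma (ksub W (Suc k)) (\<lambda>S. S)"
      using a unfolding ksub_def by (auto simp: card_insert_if)
  next
    fix a assume a: "a \<in> Sigma (ksub W (Suc k)) (\<lambda>S. S)"
    obtain S v where [simp]: "a = (S,v)" by (cases a)
    show "(case (case a of (S, v) \<Rightarrow> (v, S - {v})) of (v, T) \<Rightarrow> (insert v T, v)) = a"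
      using a by auto
  next
    fix a assume a: "a \<in> Sigma (ksub W (Suc k)) (\<lambda>S. S)"
    obtain S v where [simp]: "a = (S,v)" by (cases a)
    have "finite S" using a fin1 by auto
    then show "(case a of (S, v) \<Rightarrow> (v, S - {v})) \<in> Sigma W (\<lambda>v. ksub (W - {v}) k)"
      using a unfolding ksub_def by (auto simp: card_insert_if)
  next
    fix a assume a: "a \<in> Sigma (ksub W (Suc k)) (\<lambda>S. S)"
    obtain S v where [simp]: "a = (S,v)" by (cases a)
    show "(case (case a of (S, v) \<Rightarrow> (v, S - {v})) of (v, T) \<Rightarrow> f v T) = (case a of (S, v) \<Rightarrow> f v (S - {v}))"
      by simp
  qed
  also have "\<dots> = (\<Sum>v\<in>W. \<Sum>T\<in>ksub (W - {v}) k. f v T)"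
    by (rule sum.Sigma[symmetric]) (use W in auto)
  finally show ?thesis .
qed

lemma esym_Suc:
  assumes W: "finite W"
  shows "real (Suc k) * esym W (Suc k) w = (\<Sum>v\<in>W. w v * esym (W - {v}) k w)"
proof -
  have "real (Suc k) * esym W (Suc k) w = (\<Sum>S\<in>ksub W (Suc k). \<Sum>v\<in>S. w v * (\<Prod>i\<in>S - {v}. w i))"
    unfolding esym_def sum_distrib_left
  proof (rule sum.cong[OF refl])
    fix S assume S: "S \<in> ksub W (Suc k)"
    then have fS: "finite S" and cS: "card S = Suc k" using W unfolding ksub_def by (auto intro: finite_subset)
    have "(\<Sum>v\<in>S. w v * (\<Prod>i\<in>S - {v}. w i)) = (\<Sum>v\<in>S. (\<Prod>i\<in>S. w i))"
      by (rule sum.cong[OF refl]) (use fS in \<open>simp add: prod.remove\<close>)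
    then show "real (Suc k) * (\<Prod>i\<in>S. w i) = (\<Sum>v\<in>S. w v * (\<Prod>i\<in>S - {v}. w i))"
      using cS by simp
  qed
  also have "\<dots> = (\<Sum>v\<in>W. \<Sum>T\<in>ksub (W - {v}) k. w v * (\<Prod>i\<in>T. w i))"
    by (rule dcount[OF W, where f="\<lambda>v T. w v * (\<Prod>i\<in>T. w i)"])
  also have "\<dots> = (\<Sum>v\<in>W. w v * esym (W - {v}) k w)"
    unfolding esym_def by (simp add: sum_distrib_left)
  finally show ?thesis .
qed

lemma esym_nonneg: "(\<And>i. i \<in> W \<Longrightarrow> w i \<ge> 0) \<Longrightarrow> esym W k w \<ge> 0"
  unfolding esym_def ksub_def by (intro sum_nonneg prod_nonneg) auto

lemma esym_mono_set:
  assumes "finite W" "V \<subseteq> W" "\<And>i. i \<in> W \<Longrightarrow> w i \<ge> 0"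
  shows "esym V k w \<le> esym W k w"
  unfolding esym_def
  by (rule sum_mono2) (use assms in \<open>auto simp: ksub_def intro!: prod_nonneg\<close>)

lemma esym_le_pow:
  assumes "finite W" "\<And>i. i \<in> W \<Longrightarrow> w i \<ge> 0"
  shows "esym W k w \<le> (\<Sum>i\<in>W. w i)^k"
proof (induction k)
  case 0
  have "ksub W 0 = {{}}" unfolding ksub_def using assms(1) by (auto intro: finite_subset simp: card_eq_0_iff)
  then show ?case by (simp add: esym_def)
next
  case (Suc k)
  have "real (Suc k) * esym W (Suc k) w = (\<Sum>v\<in>W. w v * esym (W - {v}) k w)"
    by (rule esym_Suc[OF assms(1)])
  also have "\<dots> \<le> (\<Sum>v\<in>W. w v * (\<Sum>i\<in>W. w i)^k)"
  proof (rule sum_mono)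
    fix v assume v: "v \<in> W"
    have "esym (W - {v}) k w \<le> esym W k w" by (rule esym_mono_set) (use assms in auto)
    also have "\<dots> \<le> (\<Sum>i\<in>W. w i)^k" by (rule Suc)
    finally show "w v * esym (W - {v}) k w \<le> w v * (\<Sum>i\<in>W. w i)^k"
      using assms(2)[OF v] by (simp add: mult_left_mono)
  qed
  also have "\<dots> = (\<Sum>i\<in>W. w i)^Suc k" by (simp add: sum_distrib_right[symmetric])
  finally have "real (Suc k) * esym W (Suc k) w \<le> (\<Sum>i\<in>W. w i)^Suc k" .
  moreover have "esym W (Suc k) w \<ge> 0" by (rule esym_nonneg) (use assms in auto)
  ultimately show ?case
    by (smt (verit, ccfv_SIG) mult_le_cancel_right1 of_nat_0_le_iff of_nat_Suc)
qed

lemma esym_swap: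
  assumes W: "finite W"
  shows "(\<Sum>S\<in>ksub W k. (\<Prod>i\<in>S. w i) * (\<Sum>v\<in>W - S. w v)) = real (Suc k) * esym W (Suc k) w"
proof -
  have "(\<Sum>S\<in>ksub W k. (\<Prod>i\<in>S. w i) * (\<Sum>v\<in>W - S. w v))
      = (\<Sum>S\<in>ksub W k. \<Sum>v\<in>W. (if v \<in> S then 0 else w v * (\<Prod>i\<in>S. w i)))"
  proof (rule sum.cong[OF refl])
    fix S assume "S \<in> ksub W k"
    then have "S \<subseteq> W" unfolding ksub_def by auto
    have "(\<Sum>v\<in>W. (if v \<in> S then 0 else w v * (\<Prod>i\<in>S. w i))) = (\<Sum>v\<in>W - S. w v * (\<Prod>i\<in>S. w i))"
      using W by (simp add: sum.If_cases Diff_eq)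
    then show "(\<Prod>i\<in>S. w i) * (\<Sum>v\<in>W - S. w v) = (\<Sum>v\<in>W. (if v \<in> S then 0 else w v * (\<Prod>i\<in>S. w i)))"
      by (simp add: sum_distrib_left mult.commute)
  qed
  also have "\<dots> = (\<Sum>v\<in>W. \<Sum>S\<in>ksub W k. (if v \<in> S then 0 else w v * (\<Prod>i\<in>S. w i)))"
    by (rule sum.swap)
  also have "\<dots> = (\<Sum>v\<in>W. w v * esym (W - {v}) k w)"
  proof (rule sum.cong[OF refl])
    fix v assume v: "v \<in> W"
    have "ksub (W - {v}) k = {S \<in> ksub W k. v \<notin> S}" unfolding ksub_def by auto
    then show "(\<Sum>S\<in>ksub W k. (if v \<in> S then 0 else w v * (\<Prod>i\<in>S. w i))) = w v * esym (W - {v}) k w"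
      unfolding esym_def using W by (simp add: sum.If_cases sum_distrib_left Int_def)
  qed
  also have "\<dots> = real (Suc k) * esym W (Suc k) w" by (rule esym_Suc[OF W, symmetric])
  finally show ?thesis .
qed

lemma sum_diff_w:
  assumes "finite W" "S \<subseteq> W" "(\<Sum>i\<in>W. w i) = (1::real)"
  shows "(\<Sum>v\<in>W - S. w v) = 1 - (\<Sum>i\<in>S. w i)"
  using assms by (simp add: sum_diff)

lemma esym_super:
  fixes w :: "'b \<Rightarrow> real"
  assumes W: "finite W" and w0: "\<And>i. i \<in> W \<Longrightarrow> w i \<ge> 0" and w1: "(\<Sum>i\<in>W. w i) = 1"
    and th: "0 < \<theta>"
  shows "esym W (Suc k) w \<le> 1 / real (Suc k) ^ Suc k + \<theta> + real (Suc (Suc k)) / \<theta> * esym W (Suc (Suc k)) w"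
proof (cases "\<exists>S0\<in>ksub W (Suc k). (\<Sum>i\<in>S0. w i) > 1 - \<theta>")
  case True
  then obtain S0 where S0: "S0 \<in> ksub W (Suc k)" and h: "(\<Sum>i\<in>S0. w i) > 1 - \<theta>" by blast
  have S0W: "S0 \<subseteq> W" and cS0: "card S0 = Suc k" using S0 unfolding ksub_def by auto
  have fS0: "finite S0" using S0W W by (auto intro: finite_subset)
  have eq: "esym W (Suc k) w = (\<Prod>i\<in>S0. w i) + (\<Sum>S\<in>ksub W (Suc k) - {S0}. \<Prod>i\<in>S. w i)"
    unfolding esym_def using S0 W by (simp add: sum.remove)
  have p1: "(\<Prod>i\<in>S0. w i) \<le> 1 / real (Suc k) ^ Suc k"
  proof -
    have "(\<Prod>i\<in>S0. w i) \<le> ((\<Sum>i\<in>S0. w i) / Suc k) ^ Suc k"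
      by (rule amgm[OF fS0 cS0]) (use w0 S0W in auto)
    also have "\<dots> \<le> (1 / Suc k) ^ Suc k"
    proof (intro power_mono divide_right_mono)
      show "(\<Sum>i\<in>S0. w i) \<le> 1" using w1 sum_mono2[OF W S0W, of w] w0 by auto
      show "0 \<le> (\<Sum>i\<in>S0. w i) / real (Suc k)" using w0 S0W by (intro divide_nonneg_nonneg sum_nonneg) auto
    qed auto
    finally show ?thesis by (simp add: power_divide)
  qed
  define g where "g v = (if v \<in> S0 then 0 else w v)" for v
  have p2: "(\<Sum>S\<in>ksub W (Suc k) - {S0}. \<Prod>i\<in>S. w i) \<le> \<theta>"
  proof -
    have "(\<Sum>S\<in>ksub W (Suc k) - {S0}. \<Prod>i\<in>S. w i)
        \<le> (\<Sum>S\<in>ksub W (Suc k) - {S0}. \<Sum>v\<in>S. g v * (\<Prod>i\<in>S - {v}. w i))"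
    proof (rule sum_mono)
      fix S assume S: "S \<in> ksub W (Suc k) - {S0}"
      then have SW: "S \<subseteq> W" and cS: "card S = Suc k" and ne: "S \<noteq> S0" unfolding ksub_def by auto
      have fS: "finite S" using SW W by (auto intro: finite_subset)
      have "\<not> S \<subseteq> S0" using card_subset_eq[OF fS0 _ ] cS cS0 ne by metis
      then obtain v where v: "v \<in> S" "v \<notin> S0" by auto
      have "(\<Prod>i\<in>S. w i) = g v * (\<Prod>i\<in>S - {v}. w i)"
        using v fS by (simp add: g_def prod.remove)
      also have "\<dots> \<le> (\<Sum>v\<in>S. g v * (\<Prod>i\<in>S - {v}. w i))"
        by (rule member_le_sum) (use v fS SW w0 in \<open>auto simp: g_def intro!: mult_nonneg_nonneg prod_nonneg\<close>)
      finally show "(\<Prod>i\<in>S. w i) \<le> (\<Sum>v\<in>S. g v * (\<Prod>i\<in>S - {v}. w i))" .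
    qed
    also have "\<dots> \<le> (\<Sum>S\<in>ksub W (Suc k). \<Sum>v\<in>S. g v * (\<Prod>i\<in>S - {v}. w i))"
      by (rule sum_mono2) (use W w0 in \<open>auto simp: ksub_def g_def intro!: sum_nonneg mult_nonneg_nonneg prod_nonneg\<close>)
    also have "\<dots> = (\<Sum>v\<in>W. \<Sum>T\<in>ksub (W - {v}) k. g v * (\<Prod>i\<in>T. w i))"
      by (rule dcount[OF W, where f="\<lambda>v T. g v * (\<Prod>i\<in>T. w i)"])
    also have "\<dots> = (\<Sum>v\<in>W. g v * esym (W - {v}) k w)"
      unfolding esym_def by (simp add: sum_distrib_left)
    also have "\<dots> \<le> (\<Sum>v\<in>W. g v * 1)"
    proof (rule sum_mono)
      fix v assume v: "v \<in> W"
      have "esym (W - {v}) k w \<le> (\<Sum>i\<in>W - {v}. w i)^k"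
        by (rule esym_le_pow) (use W w0 in auto)
      also have "\<dots> \<le> 1"
      proof (rule power_le_one)
        show "0 \<le> (\<Sum>i\<in>W - {v}. w i)" using w0 by (auto intro: sum_nonneg)
        show "(\<Sum>i\<in>W - {v}. w i) \<le> 1" using w1 sum_mono2[OF W, of "W - {v}" w] w0 by auto
      qed
      finally show "g v * esym (W - {v}) k w \<le> g v * 1"
        using w0 v by (auto simp: g_def intro: mult_left_le)
    qed
    also have "\<dots> = (\<Sum>v\<in>W - S0. w v)"
      using W S0W by (simp add: g_def sum.If_cases Diff_eq)
    also have "\<dots> = 1 - (\<Sum>i\<in>S0. w i)" by (rule sum_diff_w[OF W S0W w1])
    also have "\<dots> \<le> \<theta>" using h by simp
    finally show ?thesis .
  qed
  have "esym W (Suc (Suc k)) w \<ge> 0" by (rule esym_nonneg) (use w0 in auto)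
  then have "real (Suc (Suc k)) / \<theta> * esym W (Suc (Suc k)) w \<ge> 0" using th by simp
  then show ?thesis using eq p1 p2 by linarith
next
  case False
  have "esym W (Suc k) w \<le> (\<Sum>S\<in>ksub W (Suc k). (\<Prod>i\<in>S. w i) * (\<Sum>v\<in>W - S. w v)) / \<theta>"
    unfolding esym_def sum_divide_distrib
  proof (rule sum_mono)
    fix S assume S: "S \<in> ksub W (Suc k)"
    then have SW: "S \<subseteq> W" unfolding ksub_def by auto
    have "(\<Sum>v\<in>W - S. w v) \<ge> \<theta>" using False S sum_diff_w[OF W SW w1] by auto
    moreover have "(\<Prod>i\<in>S. w i) \<ge> 0" using w0 SW by (auto intro: prod_nonneg)
    ultimately have "(\<Prod>i\<in>S. w i) * \<theta> \<le> (\<Prod>i\<in>S. w i) * (\<Sum>v\<in>W - S. w v)"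
      by (simp add: mult_left_mono)
    then show "(\<Prod>i\<in>S. w i) \<le> (\<Prod>i\<in>S. w i) * (\<Sum>v\<in>W - S. w v) / \<theta>"
      using th by (simp add: le_divide_eq)
  qed
  also have "\<dots> = real (Suc (Suc k)) / \<theta> * esym W (Suc (Suc k)) w"
    using esym_swap[OF W, of w "Suc k"] by simp
  finally show ?thesis using th by (smt (verit) divide_nonneg_nonneg zero_le_power of_nat_0_le_iff)
qed

definition Fp :: "'b set set \<Rightarrow> ('b set \<Rightarrow> real) \<Rightarrow> ('b \<Rightarrow> real) \<Rightarrow> real" where
  "Fp \<S> c y = (\<Sum>S\<in>\<S>. c S * (\<Prod>i\<in>S. y i))"

definition A0p where "A0p \<S> c u v y = (\<Sum>S\<in>\<S> \<inter> - {S. u \<in> S} \<inter> - {S. v \<in> S}. c S * (\<Prod>i\<in>S. y i))"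
definition Bup where "Bup \<S> c u v y = (\<Sum>S\<in>\<S> \<inter> {S. u \<in> S}. c S * (\<Prod>i\<in>S - {u}. y i))"
definition Bvp where "Bvp \<S> c u v y = (\<Sum>S\<in>\<S> \<inter> - {S. u \<in> S} \<inter> {S. v \<in> S}. c S * (\<Prod>i\<in>S - {v}. y i))"

lemma Fp_decomp:
  assumes fin: "finite \<S>" "\<And>S. S \<in> \<S> \<Longrightarrow> finite S"
  shows "Fp \<S> c y = A0p \<S> c u v y + y u * Bup \<S> c u v y + y v * Bvp \<S> c u v y"
proof -
  have "Fp \<S> c y = (\<Sum>S\<in>\<S>. if u \<in> S then y u * (c S * (\<Prod>i\<in>S - {u}. y i))
       else (if v \<in> S then y v * (c S * (\<Prod>i\<in>S - {v}. y i)) else c S * (\<Prod>i\<in>S. y i)))"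
    unfolding Fp_def by (rule sum.cong[OF refl]) (use fin in \<open>auto simp: prod.remove\<close>)
  also have "\<dots> = A0p \<S> c u v y + y u * Bup \<S> c u v y + y v * Bvp \<S> c u v y"
    unfolding A0p_def Bup_def Bvp_def using fin(1)
    by (simp add: sum.If_cases sum_distrib_left Int_assoc)
  finally show ?thesis .
qed

lemma pieces_eq:
  assumes agree: "\<And>i. i \<noteq> u \<Longrightarrow> i \<noteq> v \<Longrightarrow> y i = y' i"
    and nb: "\<And>S. S \<in> \<S> \<Longrightarrow> \<not> (u \<in> S \<and> v \<in> S)"
  shows "A0p \<S> c u v y = A0p \<S> c u v y'" "Bup \<S> c u v y = Bup \<S> c u v y'" "Bvp \<S> c u v y = Bvp \<S> c u v y'"
proof -
  show "A0p \<S> c u v y = A0p \<S> c u v y'" unfolding A0p_def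
    by (intro sum.cong refl arg_cong2[where f="(*)"] prod.cong) (auto intro: agree)
  show "Bup \<S> c u v y = Bup \<S> c u v y'" unfolding Bup_def
    by (intro sum.cong refl arg_cong2[where f="(*)"] prod.cong) (use nb in \<open>auto intro!: agree\<close>)
  show "Bvp \<S> c u v y = Bvp \<S> c u v y'" unfolding Bvp_def
    by (intro sum.cong refl arg_cong2[where f="(*)"] prod.cong) (use nb in \<open>auto intro!: agree\<close>)
qed

lemma zykov:
  fixes z :: "'b \<Rightarrow> real"
  assumes V: "finite V" and SV: "\<And>S. S \<in> \<S> \<Longrightarrow> S \<subseteq> V"
    and Scl: "\<And>S u v. S \<in> \<S> \<Longrightarrow> u \<in> S \<Longrightarrow> v \<in> S \<Longrightarrow> u \<noteq> v \<Longrightarrow> E u v"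
    and z0: "\<And>i. i \<in> V \<Longrightarrow> z i \<ge> 0"
  shows "\<exists>z'. (\<forall>i\<in>V. z' i \<ge> 0) \<and> (\<Sum>i\<in>V. z' i) = (\<Sum>i\<in>V. z i) \<and> Fp \<S> c z' \<ge> Fp \<S> c z
     \<and> (\<forall>u\<in>V. \<forall>v\<in>V. u \<noteq> v \<and> z' u \<noteq> 0 \<and> z' v \<noteq> 0 \<longrightarrow> E u v)"
  using z0
proof (induction "card {i\<in>V. z i \<noteq> 0}" arbitrary: z rule: less_induct)
  case less
  have finS: "finite \<S>" using V SV by (rule_tac finite_subset[of _ "Pow V"]) auto
  have finS': "\<And>S. S \<in> \<S> \<Longrightarrow> finite S" using V SV by (auto intro: finite_subset)
  show ?case
  proof (cases "\<forall>u\<in>V. \<forall>v\<in>V. u \<noteq> v \<and> z u \<noteq> 0 \<and> z v \<noteq> 0 \<longrightarrow> E u v")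
    case True then show ?thesis using less.prems by blast
  next
    case False
    then obtain u v where uv: "u \<in> V" "v \<in> V" "u \<noteq> v" "z u \<noteq> 0" "z v \<noteq> 0" "\<not> E u v" by blast
    have nb: "\<And>S. S \<in> \<S> \<Longrightarrow> \<not> (u \<in> S \<and> v \<in> S)" using Scl uv by blast
    define z1 where "z1 = z(u := z u + z v, v := 0)"
    define z2 where "z2 = z(v := z u + z v, u := 0)"
    have a1: "\<And>i. i \<noteq> u \<Longrightarrow> i \<noteq> v \<Longrightarrow> z i = z1 i" unfolding z1_def by auto
    have a2: "\<And>i. i \<noteq> u \<Longrightarrow> i \<noteq> v \<Longrightarrow> z i = z2 i" unfolding z2_def by auto
    note d = Fp_decomp[OF finS finS', of c _ u v]
    have F: "Fp \<S> c z = A0p \<S> c u v z + z u * Bup \<S> c u v z + z v * Bvp \<S> c u v z" by (rule d)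
    have z1uv: "z1 u = z u + z v" "z1 v = 0" using uv(3) by (auto simp: z1_def)
    have z2uv: "z2 v = z u + z v" "z2 u = 0" using uv(3) by (auto simp: z2_def)
    have F1: "Fp \<S> c z1 = A0p \<S> c u v z + (z u + z v) * Bup \<S> c u v z"
      using d[of z1] pieces_eq[OF a1 nb] z1uv by simp
    have F2: "Fp \<S> c z2 = A0p \<S> c u v z + (z u + z v) * Bvp \<S> c u v z"
      using d[of z2] pieces_eq[OF a2 nb] z2uv by simp
    have zu: "z u \<ge> 0" "z v \<ge> 0" using less.prems uv by auto
    have best: "Fp \<S> c z \<le> Fp \<S> c z1 \<or> Fp \<S> c z \<le> Fp \<S> c z2"
    proof (cases "Bup \<S> c u v z \<ge> Bvp \<S> c u v z")
      case True
      then have "z v * Bvp \<S> c u v z \<le> z v * Bup \<S> c u v z" using zu by (simp add: mult_left_mono)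
      then show ?thesis using F F1 by (simp add: algebra_simps)
    next
      case False
      then have "z u * Bup \<S> c u v z \<le> z u * Bvp \<S> c u v z" using zu by (simp add: mult_left_mono)
      then show ?thesis using F F2 by (simp add: algebra_simps)
    qed
    have s1: "(\<Sum>i\<in>V. z1 i) = (\<Sum>i\<in>V. z i)"
    proof -
      have "(\<Sum>i\<in>V. z1 i) = z1 u + z1 v + (\<Sum>i\<in>V - {u} - {v}. z1 i)"
        using V uv by (simp add: sum.remove[of V u] sum.remove[of "V - {u}" v])
      moreover have "(\<Sum>i\<in>V. z i) = z u + z v + (\<Sum>i\<in>V - {u} - {v}. z i)"
        using V uv by (simp add: sum.remove[of V u] sum.remove[of "V - {u}" v])
      moreover have "(\<Sum>i\<in>V - {u} - {v}. z1 i) = (\<Sum>i\<in>V - {u} - {v}. z i)"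
        by (rule sum.cong) (auto simp: z1_def)
      ultimately show ?thesis using uv(3) by (simp add: z1_def)
    qed
    have s2: "(\<Sum>i\<in>V. z2 i) = (\<Sum>i\<in>V. z i)"
    proof -
      have "(\<Sum>i\<in>V. z2 i) = z2 u + z2 v + (\<Sum>i\<in>V - {u} - {v}. z2 i)"
        using V uv by (simp add: sum.remove[of V u] sum.remove[of "V - {u}" v])
      moreover have "(\<Sum>i\<in>V. z i) = z u + z v + (\<Sum>i\<in>V - {u} - {v}. z i)"
        using V uv by (simp add: sum.remove[of V u] sum.remove[of "V - {u}" v])
      moreover have "(\<Sum>i\<in>V - {u} - {v}. z2 i) = (\<Sum>i\<in>V - {u} - {v}. z i)"
        by (rule sum.cong) (auto simp: z2_def)
      ultimately show ?thesis using uv(3) by (simp add: z2_def)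
    qed
    have c1: "card {i\<in>V. z1 i \<noteq> 0} < card {i\<in>V. z i \<noteq> 0}"
    proof (rule psubset_card_mono)
      show "finite {i\<in>V. z i \<noteq> 0}" using V by auto
      show "{i\<in>V. z1 i \<noteq> 0} \<subset> {i\<in>V. z i \<noteq> 0}"
        using uv zu by (auto simp: z1_def)
    qed
    have c2: "card {i\<in>V. z2 i \<noteq> 0} < card {i\<in>V. z i \<noteq> 0}"
    proof (rule psubset_card_mono)
      show "finite {i\<in>V. z i \<noteq> 0}" using V by auto
      show "{i\<in>V. z2 i \<noteq> 0} \<subset> {i\<in>V. z i \<noteq> 0}"
        using uv zu by (auto simp: z2_def)
    qed
    have n1: "\<And>i. i \<in> V \<Longrightarrow> z1 i \<ge> 0" using less.prems zu by (auto simp: z1_def)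
    have n2: "\<And>i. i \<in> V \<Longrightarrow> z2 i \<ge> 0" using less.prems zu by (auto simp: z2_def)
    from best show ?thesis
    proof
      assume h: "Fp \<S> c z \<le> Fp \<S> c z1"
      obtain z' where "(\<forall>i\<in>V. z' i \<ge> 0) \<and> (\<Sum>i\<in>V. z' i) = (\<Sum>i\<in>V. z1 i) \<and> Fp \<S> c z' \<ge> Fp \<S> c z1
         \<and> (\<forall>u\<in>V. \<forall>v\<in>V. u \<noteq> v \<and> z' u \<noteq> 0 \<and> z' v \<noteq> 0 \<longrightarrow> E u v)"
        using less.hyps[OF c1 n1] by blast
      then show ?thesis using h s1 by (intro exI[of _ z']) auto
    next
      assume h: "Fp \<S> c z \<le> Fp \<S> c z2"
      obtain z' where "(\<forall>i\<in>V. z' i \<ge> 0) \<and> (\<Sum>i\<in>V. z' i) = (\<Sum>i\<in>V. z2 i) \<and> Fp \<S> c z' \<ge> Fp \<S> c z2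
         \<and> (\<forall>u\<in>V. \<forall>v\<in>V. u \<noteq> v \<and> z' u \<noteq> 0 \<and> z' v \<noteq> 0 \<longrightarrow> E u v)"
        using less.hyps[OF c2 n2] by blast
      then show ?thesis using h s2 by (intro exI[of _ z']) auto
    qed
  qed
qed

definition cliques :: "nat \<Rightarrow> (nat \<Rightarrow> nat \<Rightarrow> bool) \<Rightarrow> nat \<Rightarrow> nat set set" where
  "cliques n E k = {S. is_clique n E k S}"

definition Pc :: "nat \<Rightarrow> (nat \<Rightarrow> nat \<Rightarrow> bool) \<Rightarrow> nat \<Rightarrow> (nat \<Rightarrow> real) \<Rightarrow> real" where
  "Pc n E k x = (\<Sum>S\<in>cliques n E k. \<Prod>i\<in>S. x i)"

lemma cliques_sub: "cliques n E k \<subseteq> Pow {0..<n}"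
  unfolding cliques_def is_clique_def by auto

lemma finite_cliques[simp]: "finite (cliques n E k)"
  using cliques_sub by (rule finite_subset) auto

lemma cliques_card: "S \<in> cliques n E k \<Longrightarrow> card S = k"
  unfolding cliques_def is_clique_def by auto

lemma cliques_fin: "S \<in> cliques n E k \<Longrightarrow> finite S"
  using cliques_sub[of n E k] by (meson PowD finite_atLeastLessThan finite_subset subsetD)

lemma Pc_esym:
  assumes Wn: "W \<subseteq> {0..<n}" and Wc: "\<And>u v. u \<in> W \<Longrightarrow> v \<in> W \<Longrightarrow> u \<noteq> v \<Longrightarrow> E u v"
    and y0: "\<And>i. i < n \<Longrightarrow> i \<notin> W \<Longrightarrow> y i = 0"
  shows "Pc n E k y = esym W k y"
proof -
  have sub: "ksub W k \<subseteq> cliques n E k"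
    unfolding ksub_def cliques_def is_clique_def using Wn Wc by auto
  have "Pc n E k y = (\<Sum>S\<in>ksub W k. \<Prod>i\<in>S. y i)"
    unfolding Pc_def
  proof (rule sum.mono_neutral_right[OF finite_cliques sub])
    show "\<forall>S\<in>cliques n E k - ksub W k. (\<Prod>i\<in>S. y i) = 0"
    proof
      fix S assume S: "S \<in> cliques n E k - ksub W k"
      then have "\<not> S \<subseteq> W" "S \<subseteq> {0..<n}" "finite S" unfolding ksub_def cliques_def is_clique_def
        using cliques_fin S by auto
      then obtain i where "i \<in> S" "i \<notin> W" "i < n" by (meson atLeastLessThan_iff subsetD subsetI)
      then show "(\<Prod>i\<in>S. y i) = 0" using y0 \<open>finite S\<close> by (auto intro: prod_zero)
    qed
  qed
  then show ?thesis unfolding esym_def .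
qed

lemma supersat:
  fixes z :: "nat \<Rightarrow> real"
  assumes z0: "\<And>i. i < n \<Longrightarrow> z i \<ge> 0" and z1: "(\<Sum>i<n. z i) = 1" and th: "0 < \<theta>"
  shows "Pc n E (Suc k) z \<le> 1 / real (Suc k) ^ Suc k + \<theta> + real (Suc (Suc k)) / \<theta> * Pc n E (Suc (Suc k)) z"
proof -
  define K where "K = real (Suc (Suc k)) / \<theta>"
  define \<S> where "\<S> = cliques n E (Suc k) \<union> cliques n E (Suc (Suc k))"
  define c where "c S = (if card S = Suc k then 1 else - K)" for S :: "nat set"
  have disj: "cliques n E (Suc k) \<inter> cliques n E (Suc (Suc k)) = {}"
    using cliques_card[of _ n E] by (metis disjoint_iff n_not_Suc_n)
  have FP: "Fp \<S> c y = Pc n E (Suc k) y - K * Pc n E (Suc (Suc k)) y" for y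
  proof -
    have "Fp \<S> c y = (\<Sum>S\<in>cliques n E (Suc k). c S * (\<Prod>i\<in>S. y i)) + (\<Sum>S\<in>cliques n E (Suc (Suc k)). c S * (\<Prod>i\<in>S. y i))"
      unfolding Fp_def \<S>_def by (rule sum.union_disjoint) (use disj in auto)
    also have "(\<Sum>S\<in>cliques n E (Suc k). c S * (\<Prod>i\<in>S. y i)) = Pc n E (Suc k) y"
      unfolding Pc_def by (rule sum.cong) (auto simp: c_def cliques_card)
    also have "(\<Sum>S\<in>cliques n E (Suc (Suc k)). c S * (\<Prod>i\<in>S. y i)) = - K * Pc n E (Suc (Suc k)) y"
      unfolding Pc_def sum_distrib_left by (rule sum.cong) (auto simp: c_def cliques_card)
    finally show ?thesis by simp
  qed
  have SV: "\<And>S. S \<in> \<S> \<Longrightarrow> S \<subseteq> {0..<n}" unfolding \<S>_def cliques_def is_clique_def by auto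
  have Scl: "\<And>S u v. S \<in> \<S> \<Longrightarrow> u \<in> S \<Longrightarrow> v \<in> S \<Longrightarrow> u \<noteq> v \<Longrightarrow> E u v"
    unfolding \<S>_def cliques_def is_clique_def by auto
  obtain z' where z': "\<forall>i\<in>{0..<n}. z' i \<ge> 0" "(\<Sum>i\<in>{0..<n}. z' i) = (\<Sum>i\<in>{0..<n}. z i)"
    "Fp \<S> c z' \<ge> Fp \<S> c z" "\<forall>u\<in>{0..<n}. \<forall>v\<in>{0..<n}. u \<noteq> v \<and> z' u \<noteq> 0 \<and> z' v \<noteq> 0 \<longrightarrow> E u v"
    using zykov[of "{0..<n}" \<S> E z c] SV Scl z0 by auto
  define W where "W = {i\<in>{0..<n}. z' i \<noteq> 0}"
  have Wn: "W \<subseteq> {0..<n}" and fW: "finite W" unfolding W_def by auto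
  have Wc: "\<And>u v. u \<in> W \<Longrightarrow> v \<in> W \<Longrightarrow> u \<noteq> v \<Longrightarrow> E u v" using z'(4) unfolding W_def by auto
  have y0: "\<And>i. i < n \<Longrightarrow> i \<notin> W \<Longrightarrow> z' i = 0" unfolding W_def by auto
  have sW: "(\<Sum>i\<in>W. z' i) = 1"
  proof -
    have "(\<Sum>i\<in>W. z' i) = (\<Sum>i\<in>{0..<n}. z' i)"
      by (rule sum.mono_neutral_left) (use Wn y0 in auto)
    also have "\<dots> = 1" using z'(2) z1 by (simp add: atLeast0LessThan)
    finally show ?thesis .
  qed
  have "Pc n E (Suc k) z - K * Pc n E (Suc (Suc k)) z \<le> Pc n E (Suc k) z' - K * Pc n E (Suc (Suc k)) z'"
    using z'(3) FP by simp
  also have "\<dots> = esym W (Suc k) z' - K * esym W (Suc (Suc k)) z'"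
    using Pc_esym[OF Wn Wc y0] by simp
  also have "\<dots> \<le> 1 / real (Suc k) ^ Suc k + \<theta>"
    using esym_super[OF fW _ sW th, of k] z'(1) Wn unfolding K_def by force
  finally show ?thesis unfolding K_def by simp
qed

lemma pochhammer_ge_pow: "(x::real) \<ge> 0 \<Longrightarrow> x ^ t \<le> pochhammer x t"
proof (induction t)
  case 0 then show ?case by simp
next
  case (Suc t)
  have "x ^ Suc t = x ^ t * x" by simp
  also have "\<dots> \<le> pochhammer x t * (x + of_nat t)"
    using Suc by (intro mult_mono) (auto intro: order_trans[OF zero_le_power])
  finally show ?case by (simp add: pochhammer_Suc)
qed

lemma choose_lb: "(max (real d - real t) 0)^t \<le> fact t * real (d choose t)"
proof (cases "t \<le> d")
  case True
  have "real (d choose t) = pochhammer (real d - real t + 1) t / fact t"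
    by (simp add: binomial_gbinomial gbinomial_pochhammer')
  then have e: "fact t * real (d choose t) = pochhammer (real d - real t + 1) t" by simp
  have "(max (real d - real t) 0)^t = (real d - real t)^t" using True by simp
  also have "\<dots> \<le> (real d - real t + 1)^t" using True by (intro power_mono) auto
  also have "\<dots> \<le> pochhammer (real d - real t + 1) t" using True by (intro pochhammer_ge_pow) auto
  finally show ?thesis using e by simp
next
  case False
  then have "t > 0" by auto
  then show ?thesis using False by (simp add: power_0_left)
qed

lemma card_ksub: "finite A \<Longrightarrow> card (ksub A k) = card A choose k"
  unfolding ksub_def by (rule n_subsets)

lemma card_filter_sum: "finite A \<Longrightarrow> card {x\<in>A. P x} = (\<Sum>x\<in>A. if P x then 1 else 0::nat)"
  by (simp add: sum.inter_filter[symmetric])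

lemma card_filter_sum_real: "finite A \<Longrightarrow> real (card {x\<in>A. P x}) = (\<Sum>x\<in>A. if P x then 1 else 0::real)"
  by (simp add: sum.inter_filter[symmetric])

lemma deg_sum:
  assumes W: "finite W" and H: "\<H> \<subseteq> ksub W (Suc k)"
  shows "(\<Sum>T\<in>ksub W k. card {x\<in>W. insert x T \<in> \<H>}) = Suc k * card \<H>"
proof -
  define f where "f v T = (if insert v T \<in> \<H> then 1 else 0::real)" for v T
  have "(\<Sum>S\<in>ksub W (Suc k). \<Sum>v\<in>S. f v (S - {v})) = (\<Sum>v\<in>W. \<Sum>T\<in>ksub (W - {v}) k. f v T)"
    by (rule dcount[OF W])
  moreover have "(\<Sum>S\<in>ksub W (Suc k). \<Sum>v\<in>S. f v (S - {v})) = (\<Sum>S\<in>ksub W (Suc k). if S \<in> \<H> then real (Suc k) else 0)"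
  proof (rule sum.cong[OF refl])
    fix S assume S: "S \<in> ksub W (Suc k)"
    then have "card S = Suc k" unfolding ksub_def by auto
    moreover have "\<And>v. v \<in> S \<Longrightarrow> insert v (S - {v}) = S" by auto
    ultimately show "(\<Sum>v\<in>S. f v (S - {v})) = (if S \<in> \<H> then real (Suc k) else 0)"
      by (simp add: f_def)
  qed
  moreover have "(\<Sum>S\<in>ksub W (Suc k). if S \<in> \<H> then real (Suc k) else 0) = real (Suc k) * card \<H>"
    using H W by (simp add: sum.If_cases Int_absorb1 inf.absorb_iff2)
  moreover have "(\<Sum>T\<in>ksub W k. real (card {x\<in>W. insert x T \<in> \<H>})) = (\<Sum>v\<in>W. \<Sum>T\<in>ksub (W - {v}) k. f v T)"
  proof -
    have "(\<Sum>T\<in>ksub W k. real (card {x\<in>W. insert x T \<in> \<H>})) = (\<Sum>T\<in>ksub W k. \<Sum>x\<in>W. f x T)"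
      unfolding f_def by (rule sum.cong[OF refl], rule card_filter_sum_real[OF W])
    also have "\<dots> = (\<Sum>x\<in>W. \<Sum>T\<in>ksub W k. f x T)" by (rule sum.swap)
    also have "\<dots> = (\<Sum>v\<in>W. \<Sum>T\<in>ksub (W - {v}) k. f v T)"
    proof (rule sum.cong[OF refl])
      fix v assume v: "v \<in> W"
      show "(\<Sum>T\<in>ksub W k. f v T) = (\<Sum>T\<in>ksub (W - {v}) k. f v T)"
      proof (rule sum.mono_neutral_right)
        show "finite (ksub W k)" using W by simp
        show "ksub (W - {v}) k \<subseteq> ksub W k" unfolding ksub_def by auto
        show "\<forall>T\<in>ksub W k - ksub (W - {v}) k. f v T = 0"
        proof
          fix T assume T: "T \<in> ksub W k - ksub (W - {v}) k"
          then have "v \<in> T" "card T = k" unfolding ksub_def by auto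
          then have "insert v T \<notin> \<H>" using H unfolding ksub_def by (auto simp: insert_absorb)
          then show "f v T = 0" by (simp add: f_def)
        qed
      qed
    qed
    finally show ?thesis .
  qed
  ultimately have "(\<Sum>T\<in>ksub W k. real (card {x\<in>W. insert x T \<in> \<H>})) = real (Suc k) * card \<H>" by simp
  then have "real (\<Sum>T\<in>ksub W k. card {x\<in>W. insert x T \<in> \<H>}) = real (Suc k * card \<H>)"
    unfolding of_nat_sum of_nat_mult .
  then show ?thesis by (simp only: of_nat_eq_iff)
qed

lemma link_sum:
  assumes W: "finite W"
  shows "(\<Sum>X\<in>ksub W t. card {T\<in>ksub W k. \<forall>x\<in>X. insert x T \<in> \<H>})
       = (\<Sum>T\<in>ksub W k. card {x\<in>W. insert x T \<in> \<H>} choose t)"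
proof -
  have "(\<Sum>X\<in>ksub W t. card {T\<in>ksub W k. \<forall>x\<in>X. insert x T \<in> \<H>})
      = (\<Sum>X\<in>ksub W t. \<Sum>T\<in>ksub W k. if X \<subseteq> {x\<in>W. insert x T \<in> \<H>} then 1 else 0)"
  proof (rule sum.cong[OF refl])
    fix X assume "X \<in> ksub W t"
    then have "X \<subseteq> W" unfolding ksub_def by auto
    then have "\<And>T. (\<forall>x\<in>X. insert x T \<in> \<H>) = (X \<subseteq> {x\<in>W. insert x T \<in> \<H>})" by auto
    then show "card {T\<in>ksub W k. \<forall>x\<in>X. insert x T \<in> \<H>} = (\<Sum>T\<in>ksub W k. if X \<subseteq> {x\<in>W. insert x T \<in> \<H>} then 1 else 0)"
      using W by (simp add: card_filter_sum)
  qed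
  also have "\<dots> = (\<Sum>T\<in>ksub W k. \<Sum>X\<in>ksub W t. if X \<subseteq> {x\<in>W. insert x T \<in> \<H>} then 1 else 0)"
    by (rule sum.swap)
  also have "\<dots> = (\<Sum>T\<in>ksub W k. card {x\<in>W. insert x T \<in> \<H>} choose t)"
  proof (rule sum.cong[OF refl])
    fix T
    have "(\<Sum>X\<in>ksub W t. if X \<subseteq> {x\<in>W. insert x T \<in> \<H>} then 1 else 0) = card {X\<in>ksub W t. X \<subseteq> {x\<in>W. insert x T \<in> \<H>}}"
      using W by (simp add: card_filter_sum)
    also have "{X\<in>ksub W t. X \<subseteq> {x\<in>W. insert x T \<in> \<H>}} = ksub {x\<in>W. insert x T \<in> \<H>} t"
      unfolding ksub_def by auto
    also have "card \<dots> = card {x\<in>W. insert x T \<in> \<H>} choose t"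
      by (rule card_ksub) (use W in auto)
    finally show "(\<Sum>X\<in>ksub W t. if X \<subseteq> {x\<in>W. insert x T \<in> \<H>} then 1 else 0) = card {x\<in>W. insert x T \<in> \<H>} choose t" .
  qed
  finally show ?thesis .
qed

definition has_Kpart :: "nat \<Rightarrow> nat set set \<Rightarrow> nat \<Rightarrow> nat \<Rightarrow> bool" where
  "has_Kpart n \<H> k t \<longleftrightarrow> (\<exists>A. (\<forall>i<k. A i \<subseteq> {0..<n} \<and> card (A i) = t)
     \<and> (\<forall>i<k. \<forall>j<k. i \<noteq> j \<longrightarrow> A i \<inter> A j = {})
     \<and> (\<forall>f. (\<forall>i<k. f i \<in> A i) \<longrightarrow> f ` {0..<k} \<in> \<H>))"

lemma choose_le_pow: "n choose k \<le> n ^ k"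
  by (cases "k \<le> n") (auto simp: binomial_le_pow binomial_eq_0)

lemma kst_step_count:
  fixes n k t :: nat and c :: real
  assumes t: "t \<ge> 1" and c: "c > 0" and n: "real n \<ge> 2 * real t / c" and n1: "n \<ge> 1"
    and H: "\<H> \<subseteq> ksub {0..<n} (Suc k)" and cH: "real (card \<H>) \<ge> c * real n ^ Suc k"
  shows "((c/2) * real n ^ Suc k)^t \<le> real n ^ (k * (t - 1)) * fact t *
          (\<Sum>X\<in>ksub {0..<n} t. real (card {T\<in>ksub {0..<n} k. \<forall>x\<in>X. insert x T \<in> \<H>}))"
proof -
  define W where "W = {0..<n}"
  have fW: "finite W" unfolding W_def by simp
  define d where "d T = card {x\<in>W. insert x T \<in> \<H>}" for T
  define m where "m T = max (real (d T) - real t) 0" for T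
  define M where "M = card (ksub W k)"
  have M: "real M \<le> real n ^ k" unfolding M_def W_def using card_ksub[of "{0..<n}" k] choose_le_pow[of n k]
    by (simp del: of_nat_power add: of_nat_power[symmetric])
  have s1: "(\<Sum>T\<in>ksub W k. real (d T)) = real (Suc k) * card \<H>"
    using deg_sum[OF fW, of \<H> k] H unfolding d_def W_def
    by (metis (no_types, lifting) of_nat_mult of_nat_sum sum.cong)
  have s2: "(c/2) * real n ^ Suc k \<le> (\<Sum>T\<in>ksub W k. m T)"
  proof -
    have "(\<Sum>T\<in>ksub W k. real (d T) - real t) \<le> (\<Sum>T\<in>ksub W k. m T)"
      by (rule sum_mono) (simp add: m_def)
    moreover have "(\<Sum>T\<in>ksub W k. real (d T) - real t) = real (Suc k) * card \<H> - real M * t"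
      using s1 by (simp add: sum_subtractf M_def)
    moreover have "real (Suc k) * card \<H> \<ge> c * real n ^ Suc k"
    proof -
      have "real (Suc k) * card \<H> \<ge> 1 * real (card \<H>)" by (intro mult_right_mono) auto
      then show ?thesis using cH by simp
    qed
    moreover have "real M * t \<le> (c/2) * real n ^ Suc k"
    proof -
      have "real M * t \<le> real n ^ k * t" using M by (intro mult_right_mono) auto
      also have "\<dots> \<le> real n ^ k * (c/2 * real n)"
      proof (intro mult_left_mono)
        show "real t \<le> c / 2 * real n" using n c by (simp add: field_simps)
      qed auto
      also have "\<dots> = (c/2) * real n ^ Suc k" by simp
      finally show ?thesis .
    qed
    ultimately show ?thesis by linarith
  qed
  have s3: "(\<Sum>T\<in>ksub W k. m T)^t \<le> real M ^ (t - 1) * (\<Sum>T\<in>ksub W k. m T ^ t)"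
    unfolding M_def by (rule power_mean) (use fW t in \<open>auto simp: m_def\<close>)
  have s4: "(\<Sum>T\<in>ksub W k. m T ^ t) \<le> fact t * (\<Sum>T\<in>ksub W k. real (d T choose t))"
    unfolding sum_distrib_left by (rule sum_mono) (simp add: m_def choose_lb)
  have s5: "(\<Sum>T\<in>ksub W k. real (d T choose t)) =
      (\<Sum>X\<in>ksub W t. real (card {T\<in>ksub W k. \<forall>x\<in>X. insert x T \<in> \<H>}))"
    using link_sum[OF fW, where t=t and k=k and \<H>=\<H>] unfolding d_def
    by (metis (no_types, lifting) of_nat_sum sum.cong)
  have "((c/2) * real n ^ Suc k)^t \<le> (\<Sum>T\<in>ksub W k. m T)^t"
    using s2 c by (intro power_mono) auto
  also have "\<dots> \<le> real M ^ (t - 1) * (\<Sum>T\<in>ksub W k. m T ^ t)" by (rule s3)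
  also have "\<dots> \<le> (real n ^ k) ^ (t - 1) * (fact t * (\<Sum>T\<in>ksub W k. real (d T choose t)))"
  proof (rule mult_mono)
    show "real M ^ (t - 1) \<le> (real n ^ k) ^ (t - 1)" using M by (intro power_mono) auto
    show "(\<Sum>T\<in>ksub W k. m T ^ t) \<le> fact t * (\<Sum>T\<in>ksub W k. real (d T choose t))" by (rule s4)
    show "0 \<le> (real n ^ k) ^ (t - 1)" by simp
    show "0 \<le> (\<Sum>T\<in>ksub W k. m T ^ t)" by (intro sum_nonneg) (simp add: m_def)
  qed
  also have "\<dots> = real n ^ (k * (t - 1)) * fact t *
          (\<Sum>X\<in>ksub {0..<n} t. real (card {T\<in>ksub {0..<n} k. \<forall>x\<in>X. insert x T \<in> \<H>}))"
    using s5 unfolding W_def by (simp add: power_mult)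
  finally show ?thesis .
qed

lemma kst:
  assumes t: "t \<ge> 1"
  shows "c > 0 \<Longrightarrow> \<exists>N. \<forall>n\<ge>N. \<forall>\<H>. \<H> \<subseteq> ksub {0..<n} k \<longrightarrow> real (card \<H>) \<ge> c * real n ^ k \<longrightarrow> has_Kpart n \<H> k t"
proof (induction k arbitrary: c)
  case 0
  show ?case
  proof (intro exI allI impI)
    fix n :: nat and \<H> assume H: "\<H> \<subseteq> ksub {0..<n} 0" and cH: "c * real n ^ 0 \<le> real (card \<H>)"
    have "\<H> \<noteq> {}" using cH 0 by auto
    moreover have "ksub {0..<n} 0 = {{}}" unfolding ksub_def by (auto simp: card_eq_0_iff intro: finite_subset)
    ultimately have "{} \<in> \<H>" using H by auto
    then show "has_Kpart n \<H> 0 t" unfolding has_Kpart_def by auto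
  qed
next
  case (Suc k)
  define c' where "c' = (c/2)^t / (2 * fact t)"
  have c'0: "c' > 0" unfolding c'_def using Suc.prems by simp
  obtain N1 where N1: "\<forall>n\<ge>N1. \<forall>\<H>. \<H> \<subseteq> ksub {0..<n} k \<longrightarrow> real (card \<H>) \<ge> c' * real n ^ k \<longrightarrow> has_Kpart n \<H> k t"
    using Suc.IH[OF c'0] by blast
  define N where "N = max N1 (nat \<lceil>2 * real t / c\<rceil> + 1)"
  show ?case
  proof (intro exI[of _ N] allI impI)
    fix n :: nat and \<H> assume nN: "N \<le> n" and H: "\<H> \<subseteq> ksub {0..<n} (Suc k)"
      and cH: "c * real n ^ Suc k \<le> real (card \<H>)"
    have n1: "n \<ge> 1" and nN1: "n \<ge> N1" using nN unfolding N_def by auto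
    have n2: "real n \<ge> 2 * real t / c"
    proof -
      have a: "nat \<lceil>2 * real t / c\<rceil> + 1 \<le> N" unfolding N_def by (rule max.cobounded2)
      have "nat \<lceil>2 * real t / c\<rceil> \<le> n" using a nN by linarith
      then have "real (nat \<lceil>2 * real t / c\<rceil>) \<le> real n" by (rule of_nat_mono)
      moreover have "2 * real t / c \<le> real (nat \<lceil>2 * real t / c\<rceil>)" by (rule real_nat_ceiling_ge)
      ultimately show ?thesis by linarith
    qed
    define lk where "lk X = {T\<in>ksub {0..<n} k. \<forall>x\<in>X. insert x T \<in> \<H>}" for X
    have cnt: "((c/2) * real n ^ Suc k)^t \<le> real n ^ (k * (t - 1)) * fact t *
          (\<Sum>X\<in>ksub {0..<n} t. real (card (lk X)))"
      unfolding lk_def by (rule kst_step_count[OF t Suc.prems n2 n1 H cH])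
    have "\<exists>X\<in>ksub {0..<n} t. real (card (lk X)) \<ge> c' * real n ^ k"
    proof (rule ccontr)
      assume "\<not> ?thesis"
      then have lt: "\<And>X. X \<in> ksub {0..<n} t \<Longrightarrow> real (card (lk X)) \<le> c' * real n ^ k" by force
      have "(\<Sum>X\<in>ksub {0..<n} t. real (card (lk X))) \<le> real (card (ksub {0..<n} t)) * (c' * real n ^ k)"
        using sum_bounded_above[of "ksub {0..<n} t" "\<lambda>X. real (card (lk X))" "c' * real n ^ k"] lt by simp
      also have "\<dots> \<le> real n ^ t * (c' * real n ^ k)"
      proof (rule mult_right_mono)
        show "real (card (ksub {0..<n} t)) \<le> real n ^ t"
          using card_ksub[of "{0..<n}" t] choose_le_pow[of n t]
          by (simp del: of_nat_power add: of_nat_power[symmetric])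
      qed (use c'0 in auto)
      finally have sb: "(\<Sum>X\<in>ksub {0..<n} t. real (card (lk X))) \<le> real n ^ t * (c' * real n ^ k)" .
      have "((c/2) * real n ^ Suc k)^t \<le> real n ^ (k * (t - 1)) * fact t * (real n ^ t * (c' * real n ^ k))"
        using cnt sb by (smt (verit) mult_left_mono fact_ge_zero mult_nonneg_nonneg zero_le_power of_nat_0_le_iff)
      also have "\<dots> = (c/2)^t * real n ^ (k * (t - 1) + t + k) / 2"
        unfolding c'_def by (simp add: power_add field_simps)
      finally have L: "((c/2) * real n ^ Suc k)^t \<le> (c/2)^t * real n ^ (k * (t - 1) + t + k) / 2" .
      have ex: "k * (t - 1) + t + k = Suc k * t" using t by (cases t) (auto simp: algebra_simps)
      have eqL: "((c/2) * real n ^ Suc k)^t = (c/2)^t * real n ^ (Suc k * t)"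
        by (simp only: power_mult_distrib power_mult[symmetric] mult.commute)
      have "(c/2)^t * real n ^ (Suc k * t) \<le> (c/2)^t * real n ^ (Suc k * t) / 2"
        using L unfolding ex eqL .
      moreover have "(c/2)^t * real n ^ (Suc k * t) > 0" using Suc.prems n1 by simp
      ultimately show False by linarith
    qed
    then obtain X where X: "X \<in> ksub {0..<n} t" and cX: "real (card (lk X)) \<ge> c' * real n ^ k" by blast
    have lkH: "lk X \<subseteq> ksub {0..<n} k" unfolding lk_def by auto
    have "has_Kpart n (lk X) k t" using N1 nN1 lkH cX by blast
    then obtain A where A1: "\<forall>i<k. A i \<subseteq> {0..<n} \<and> card (A i) = t"
      and A2: "\<forall>i<k. \<forall>j<k. i \<noteq> j \<longrightarrow> A i \<inter> A j = {}"
      and A3: "\<forall>f. (\<forall>i<k. f i \<in> A i) \<longrightarrow> f ` {0..<k} \<in> lk X"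
      unfolding has_Kpart_def by blast
    have Ane: "\<And>i. i < k \<Longrightarrow> A i \<noteq> {}" using A1 t by (metis card.empty not_one_le_zero)
    have disjX: "A i \<inter> X = {}" if i: "i < k" for i
    proof (rule ccontr)
      assume "A i \<inter> X \<noteq> {}"
      then obtain a where a: "a \<in> A i" "a \<in> X" by auto
      define f where "f j = (if j = i then a else SOME b. b \<in> A j)" for j
      have "\<forall>j<k. f j \<in> A j" using a Ane by (auto simp: f_def some_in_eq)
      then have T: "f ` {0..<k} \<in> lk X" using A3 by blast
      have "a \<in> f ` {0..<k}" using i by (auto simp: f_def image_iff intro!: bexI[of _ i])
      then have "insert a (f ` {0..<k}) = f ` {0..<k}" by auto
      moreover have "insert a (f ` {0..<k}) \<in> \<H>" using T a unfolding lk_def by auto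
      moreover have "card (f ` {0..<k}) = k" using T unfolding lk_def ksub_def by auto
      ultimately show False using H unfolding ksub_def by auto
    qed
    show "has_Kpart n \<H> (Suc k) t"
      unfolding has_Kpart_def
    proof (intro exI[of _ "A(k := X)"] conjI allI impI)
      fix i assume "i < Suc k"
      then show "(A(k := X)) i \<subseteq> {0..<n}" "card ((A(k := X)) i) = t"
        using A1 X unfolding ksub_def by (auto simp: less_Suc_eq)
    next
      fix i j assume "i < Suc k" "j < Suc k" "i \<noteq> j"
      then show "(A(k := X)) i \<inter> (A(k := X)) j = {}"
        using A2 disjX by (auto simp: less_Suc_eq)
    next
      fix f assume f: "\<forall>i<Suc k. f i \<in> (A(k := X)) i"
      then have "\<forall>i<k. f i \<in> A i" by (metis fun_upd_other less_Suc_eq less_irrefl)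
      then have "f ` {0..<k} \<in> lk X" using A3 by blast
      moreover have "f k \<in> X" using f by auto
      ultimately have "insert (f k) (f ` {0..<k}) \<in> \<H>" unfolding lk_def by auto
      moreover have "f ` {0..<Suc k} = insert (f k) (f ` {0..<k})" by (auto simp: less_Suc_eq)
      ultimately show "f ` {0..<Suc k} \<in> \<H>" by simp
    qed
  qed
qed

lemma colouring_exists:
  assumes "simple_graph VH EH" "chromatic_number VH EH = c"
  shows "\<exists>f. proper_colouring VH EH c f"
proof -
  have fin: "finite VH" using assms(1) unfolding simple_graph_def by auto
  obtain h where h: "bij_betw h VH {0..<card VH}" using ex_bij_betw_finite_nat[OF fin] by blast
  have "proper_colouring VH EH (card VH) h"
    unfolding proper_colouring_def
  proof (intro conjI ballI impI)
    fix v assume "v \<in> VH" then show "h v < card VH" using h bij_betwE by fastforce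
  next
    fix u v assume uv: "u \<in> VH" "v \<in> VH" "EH u v"
    then have "u \<noteq> v" using assms(1) unfolding simple_graph_def by auto
    moreover have "inj_on h VH" using h by (rule bij_betw_imp_inj_on)
    ultimately show "h u \<noteq> h v" using uv inj_on_eq_iff by fastforce
  qed
  then have ex: "\<exists>c f. proper_colouring VH EH c f" by blast
  have "\<exists>f. proper_colouring VH EH (LEAST c. \<exists>f. proper_colouring VH EH c f) f"
    by (rule LeastI_ex[OF ex])
  then show ?thesis using assms(2) unfolding chromatic_number_def by simp
qed

lemma VH_nonempty:
  assumes "chromatic_number VH EH = Suc r"
  shows "VH \<noteq> {}"
proof
  assume "VH = {}"
  then have "proper_colouring VH EH 0 (\<lambda>_. 0)" unfolding proper_colouring_def by auto
  then have "chromatic_number VH EH = 0" unfolding chromatic_number_def by (intro Least_eq_0) blast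
  then show False using assms by simp
qed

lemma Kpart_contains:
  assumes sg: "simple_graph VH EH" and ch: "chromatic_number VH EH = Suc r"
    and K: "has_Kpart n (cliques n E (Suc r)) (Suc r) (card VH)"
  shows "contains_subgraph n E VH EH"
proof -
  have fin: "finite VH" using sg unfolding simple_graph_def by auto
  obtain col where col: "proper_colouring VH EH (Suc r) col" using colouring_exists[OF sg ch] by blast
  obtain A where A1: "\<forall>i<Suc r. A i \<subseteq> {0..<n} \<and> card (A i) = card VH"
      and A2: "\<forall>i<Suc r. \<forall>j<Suc r. i \<noteq> j \<longrightarrow> A i \<inter> A j = {}"
      and A3: "\<forall>f. (\<forall>i<Suc r. f i \<in> A i) \<longrightarrow> f ` {0..<Suc r} \<in> cliques n E (Suc r)"
    using K unfolding has_Kpart_def by blast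
  have "\<forall>i. \<exists>h. i < Suc r \<longrightarrow> bij_betw h VH (A i)"
  proof
    fix i show "\<exists>h. i < Suc r \<longrightarrow> bij_betw h VH (A i)"
    proof (cases "i < Suc r")
      case True
      have "finite (A i)" using A1 True by (meson finite_atLeastLessThan finite_subset)
      then show ?thesis using finite_same_card_bij[OF fin, of "A i"] A1 True by auto
    qed auto
  qed
  then have "\<exists>\<psi>. \<forall>i. i < Suc r \<longrightarrow> bij_betw (\<psi> i) VH (A i)" by (rule choice)
  then obtain \<psi> where psi0: "\<forall>i. i < Suc r \<longrightarrow> bij_betw (\<psi> i) VH (A i)" by blast
  have psi: "\<And>i. i < Suc r \<Longrightarrow> bij_betw (\<psi> i) VH (A i)" using psi0 by blast
  define \<phi> where "\<phi> v = \<psi> (col v) v" for v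
  have cl: "\<And>v. v \<in> VH \<Longrightarrow> col v < Suc r" using col unfolding proper_colouring_def by auto
  have phiA: "\<And>v. v \<in> VH \<Longrightarrow> \<phi> v \<in> A (col v)" unfolding \<phi>_def using psi cl bij_betwE by blast
  have Ane: "\<And>i. i < Suc r \<Longrightarrow> A i \<noteq> {}" using A1 VH_nonempty[OF ch] fin by auto
  show ?thesis unfolding contains_subgraph_def
  proof (intro exI[of _ \<phi>] conjI)
    show "inj_on \<phi> VH"
    proof (rule inj_onI)
      fix u v assume uv: "u \<in> VH" "v \<in> VH" "\<phi> u = \<phi> v"
      have "col u = col v"
      proof (rule ccontr)
        assume "col u \<noteq> col v"
        then have "A (col u) \<inter> A (col v) = {}" using A2 cl uv by blast
        moreover have "\<phi> u \<in> A (col u) \<inter> A (col v)" using phiA[OF uv(1)] phiA[OF uv(2)] uv(3) by simp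
        ultimately show False by blast
      qed
      moreover have "inj_on (\<psi> (col u)) VH" using psi[OF cl[OF uv(1)]] by (rule bij_betw_imp_inj_on)
      ultimately show "u = v" using uv unfolding \<phi>_def by (simp add: inj_on_eq_iff)
    qed
    show "\<phi> ` VH \<subseteq> {0..<n}"
    proof (rule image_subsetI)
      fix v assume "v \<in> VH" then show "\<phi> v \<in> {0..<n}" using phiA[of v] A1 cl[of v] by blast
    qed
    show "\<forall>u\<in>VH. \<forall>v\<in>VH. EH u v \<longrightarrow> E (\<phi> u) (\<phi> v)"
    proof (intro ballI impI)
      fix u v assume uv: "u \<in> VH" "v \<in> VH" "EH u v"
      have cuv: "col u \<noteq> col v" using col uv unfolding proper_colouring_def by auto
      define f where "f j = (if j = col u then \<phi> u else if j = col v then \<phi> v else SOME b. b \<in> A j)" for j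
      have "\<forall>j<Suc r. f j \<in> A j" using phiA uv Ane by (auto simp: f_def some_in_eq)
      then have S: "f ` {0..<Suc r} \<in> cliques n E (Suc r)" using A3 by blast
      have in1: "\<phi> u \<in> f ` {0..<Suc r}" using cl[OF uv(1)] by (auto simp: f_def image_iff intro!: bexI[of _ "col u"])
      have in2: "\<phi> v \<in> f ` {0..<Suc r}" using cl[OF uv(2)] cuv by (auto simp: f_def image_iff intro!: bexI[of _ "col v"])
      have ne: "\<phi> u \<noteq> \<phi> v"
      proof
        assume "\<phi> u = \<phi> v"
        moreover have "A (col u) \<inter> A (col v) = {}" using A2 cl uv cuv by blast
        ultimately show False using phiA[OF uv(1)] phiA[OF uv(2)] by auto
      qed
      show "E (\<phi> u) (\<phi> v)" using S in1 in2 ne unfolding cliques_def is_clique_def by blast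
    qed
  qed
qed

lemma few_cliques:
  assumes sg: "simple_graph VH EH" and ch: "chromatic_number VH EH = Suc r" and d: "\<delta> > 0"
  shows "\<exists>N. \<forall>n\<ge>N. \<forall>E. H_free n E VH EH \<longrightarrow> real (card (cliques n E (Suc r))) < \<delta> * real n ^ Suc r"
proof -
  have fin: "finite VH" using sg unfolding simple_graph_def by auto
  have t: "card VH \<ge> 1" using VH_nonempty[OF ch] fin by (simp add: Suc_leI card_gt_0_iff)
  obtain N where N: "\<forall>n\<ge>N. \<forall>\<H>. \<H> \<subseteq> ksub {0..<n} (Suc r) \<longrightarrow> real (card \<H>) \<ge> \<delta> * real n ^ Suc r \<longrightarrow> has_Kpart n \<H> (Suc r) (card VH)"
    using kst[OF t d] by blast
  have sub: "cliques n E (Suc r) \<subseteq> ksub {0..<n} (Suc r)" for n E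
    unfolding cliques_def is_clique_def ksub_def by auto
  show ?thesis
  proof (intro exI[of _ N] allI impI)
    fix n E assume n: "N \<le> n" and hf: "H_free n E VH EH"
    show "real (card (cliques n E (Suc r))) < \<delta> * real n ^ Suc r"
    proof (rule ccontr)
      assume "\<not> ?thesis"
      then have "real (card (cliques n E (Suc r))) \<ge> \<delta> * real n ^ Suc r" by simp
      then have "has_Kpart n (cliques n E (Suc r)) (Suc r) (card VH)" using N n sub by blast
      then show False using Kpart_contains[OF sg ch] hf unfolding H_free_def by blast
    qed
  qed
qed

definition Dv :: "nat \<Rightarrow> (nat \<Rightarrow> nat \<Rightarrow> bool) \<Rightarrow> nat \<Rightarrow> (nat \<Rightarrow> 'c::comm_ring_1) \<Rightarrow> nat \<Rightarrow> 'c" where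
  "Dv n E r y i = (\<Sum>S\<in>{S\<in>cliques n E r. i \<in> S}. \<Prod>j\<in>S - {i}. y j)"

lemma tensor_apply_eq:
  assumes r: "r \<ge> 1"
  shows "tensor_apply n E r x i = Dv n E r x i"
proof -
  define L where "L = {js. length js = r - 1 \<and> set js \<subseteq> {0..<n}}"
  have fL: "finite L" unfolding L_def using finite_lists_length_eq[of "{0..<n}" "r - 1"]
    by (simp add: conj_commute)
  define L' where "L' = {js\<in>L. distinct (i # js) \<and> is_clique n E r (set (i # js))}"
  have fL': "finite L'" using fL unfolding L'_def by simp
  define c where "c = complex_of_real (1 / fact (r - 1))"
  have "tensor_apply n E r x i = (\<Sum>js\<in>L. if js \<in> L' then c * (\<Prod>j\<leftarrow>js. x j) else 0)"
    unfolding tensor_apply_def L_def[symmetric]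
    by (rule sum.cong[OF refl]) (auto simp: clique_tensor_def L'_def c_def)
  also have "\<dots> = (\<Sum>js\<in>L'. c * (\<Prod>j\<leftarrow>js. x j))"
    using fL by (simp add: sum.inter_filter[symmetric] L'_def)
  also have "\<dots> = (\<Sum>js\<in>L'. c * (\<Prod>j\<in>set js. x j))"
    by (rule sum.cong[OF refl]) (auto simp: L'_def prod.distinct_set_conv_list)
  also have "\<dots> = (\<Sum>T\<in>{T. insert i T \<in> cliques n E r \<and> i \<notin> T}. \<Sum>js\<in>{js\<in>L'. set js = T}. c * (\<Prod>j\<in>set js. x j))"
  proof (rule sum.group[symmetric, OF fL'])
    show "finite {T. insert i T \<in> cliques n E r \<and> i \<notin> T}"
      by (rule finite_subset[of _ "Pow {0..<n}"]) (auto simp: cliques_def is_clique_def)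
    show "set ` L' \<subseteq> {T. insert i T \<in> cliques n E r \<and> i \<notin> T}"
      by (auto simp: L'_def cliques_def)
  qed
  also have "\<dots> = (\<Sum>T\<in>{T. insert i T \<in> cliques n E r \<and> i \<notin> T}. \<Prod>j\<in>T. x j)"
  proof (rule sum.cong[OF refl])
    fix T assume T: "T \<in> {T. insert i T \<in> cliques n E r \<and> i \<notin> T}"
    then have iT: "i \<notin> T" and cl: "is_clique n E r (insert i T)" by (auto simp: cliques_def)
    have fT: "finite T" using cl unfolding is_clique_def by (meson finite_atLeastLessThan finite_insert finite_subset)
    have cT: "card T = r - 1" using cl iT fT unfolding is_clique_def by (simp; linarith)
    have eq: "{js\<in>L'. set js = T} = permutations_of_set T"
    proof (intro set_eqI iffI)
      fix js assume "js \<in> {js\<in>L'. set js = T}"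
      then show "js \<in> permutations_of_set T" by (auto simp: L'_def permutations_of_set_def)
    next
      fix js assume js: "js \<in> permutations_of_set T"
      then have d: "distinct js" and s: "set js = T" by (auto simp: permutations_of_set_def)
      then have "length js = r - 1" using cT distinct_card by fastforce
      moreover have "set js \<subseteq> {0..<n}" using s cl unfolding is_clique_def by auto
      ultimately show "js \<in> {js\<in>L'. set js = T}" using d s iT cl by (auto simp: L'_def L_def)
    qed
    have "(\<Sum>js\<in>{js\<in>L'. set js = T}. c * (\<Prod>j\<in>set js. x j)) = (\<Sum>js\<in>permutations_of_set T. c * (\<Prod>j\<in>T. x j))"
      unfolding eq by (rule sum.cong[OF refl]) (auto simp: permutations_of_set_def)
    also have "\<dots> = of_nat (fact (r - 1)) * c * (\<Prod>j\<in>T. x j)"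
      using fT cT by simp
    also have "of_nat (fact (r - 1)) * c = (1::complex)"
    proof -
      have "c = 1 / of_nat (fact (r - 1))" unfolding c_def by (simp add: of_real_divide)
      then show ?thesis by simp
    qed
    also have "1 * (\<Prod>j\<in>T. x j) = (\<Prod>j\<in>T. x j)" by simp
    finally show "(\<Sum>js\<in>{js\<in>L'. set js = T}. c * (\<Prod>j\<in>set js. x j)) = (\<Prod>j\<in>T. x j)" .
  qed
  also have "\<dots> = Dv n E r x i"
    unfolding Dv_def
  proof (rule sum.reindex_bij_witness[of _ "\<lambda>S. S - {i}" "insert i"])
    fix S assume "S \<in> {S \<in> cliques n E r. i \<in> S}" then show "insert i (S - {i}) = S" by auto
  next
    fix S assume "S \<in> {S \<in> cliques n E r. i \<in> S}" then show "S - {i} \<in> {T. insert i T \<in> cliques n E r \<and> i \<notin> T}"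
      by (auto simp: insert_absorb)
  next
    fix T assume "T \<in> {T. insert i T \<in> cliques n E r \<and> i \<notin> T}" then show "insert i T - {i} = T" by auto
  next
    fix T assume "T \<in> {T. insert i T \<in> cliques n E r \<and> i \<notin> T}" then show "insert i T \<in> {S \<in> cliques n E r. i \<in> S}" by auto
  next
    fix T assume "T \<in> {T. insert i T \<in> cliques n E r \<and> i \<notin> T}" then show "(\<Prod>j\<in>insert i T - {i}. x j) = (\<Prod>j\<in>T. x j)" by auto
  qed
  finally show ?thesis .
qed

lemma Dv_of_real: "Dv n E r (\<lambda>j. complex_of_real (y j)) i = complex_of_real (Dv n E r y i)"
  unfolding Dv_def by simp

lemma Dv_norm: "cmod (Dv n E r x i) \<le> Dv n E r (\<lambda>j. cmod (x j)) i"
  unfolding Dv_def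
  by (rule order_trans[OF norm_sum]) (simp add: prod_norm)

lemma Dv_nonneg: "(\<And>j. y j \<ge> 0) \<Longrightarrow> Dv n E r y i \<ge> (0::real)"
  unfolding Dv_def by (intro sum_nonneg prod_nonneg) auto

lemma Pc_nonneg: "(\<And>j. y j \<ge> 0) \<Longrightarrow> Pc n E r y \<ge> 0"
  unfolding Pc_def by (intro sum_nonneg prod_nonneg) auto

lemma Pc_scale: "Pc n E r (\<lambda>i. a * y i) = a ^ r * Pc n E r y"
  unfolding Pc_def sum_distrib_left
  by (rule sum.cong[OF refl]) (simp add: prod.distrib cliques_card)

lemma Pc_update: "Pc n E r (y(k := y k + \<delta>)) = Pc n E r y + \<delta> * Dv n E r y k"
proof -
  have "Pc n E r (y(k := y k + \<delta>)) = (\<Sum>S\<in>cliques n E r. (\<Prod>i\<in>S. y i) + (if k \<in> S then \<delta> * (\<Prod>j\<in>S - {k}. y j) else 0))"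
    unfolding Pc_def
  proof (rule sum.cong[OF refl])
    fix S assume S: "S \<in> cliques n E r"
    have fS: "finite S" using cliques_fin[OF S] .
    show "(\<Prod>i\<in>S. (y(k := y k + \<delta>)) i) = (\<Prod>i\<in>S. y i) + (if k \<in> S then \<delta> * (\<Prod>j\<in>S - {k}. y j) else 0)"
    proof (cases "k \<in> S")
      case True
      have "(\<Prod>i\<in>S. (y(k := y k + \<delta>)) i) = (y k + \<delta>) * (\<Prod>i\<in>S - {k}. (y(k := y k + \<delta>)) i)"
        using True fS by (simp add: prod.remove)
      also have "(\<Prod>i\<in>S - {k}. (y(k := y k + \<delta>)) i) = (\<Prod>i\<in>S - {k}. y i)" by (rule prod.cong) auto
      also have "(\<Prod>i\<in>S. y i) = y k * (\<Prod>i\<in>S - {k}. y i)" using True fS by (simp add: prod.remove)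
      ultimately show ?thesis using True by (simp add: algebra_simps)
    next
      case False
      then show ?thesis by (auto intro!: prod.cong)
    qed
  qed
  also have "\<dots> = Pc n E r y + \<delta> * Dv n E r y k"
    unfolding Pc_def Dv_def sum.distrib
    by (simp add: sum.If_cases sum_distrib_left Int_def conj_commute)
  finally show ?thesis .
qed

lemma sum_y_Dv: "(\<Sum>i<n. y i * Dv n E r y i) = real r * Pc n E r (y :: nat \<Rightarrow> real)"
proof -
  have "(\<Sum>i<n. y i * Dv n E r y i) = (\<Sum>i<n. \<Sum>S\<in>cliques n E r. if i \<in> S then (\<Prod>j\<in>S. y j) else 0)"
  proof (rule sum.cong[OF refl])
    fix i
    have "y i * Dv n E r y i = (\<Sum>S\<in>{S\<in>cliques n E r. i \<in> S}. (\<Prod>j\<in>S. y j))"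
      unfolding Dv_def sum_distrib_left
      by (rule sum.cong[OF refl]) (auto simp: prod.remove cliques_fin)
    then show "y i * Dv n E r y i = (\<Sum>S\<in>cliques n E r. if i \<in> S then (\<Prod>j\<in>S. y j) else 0)"
      by (simp add: sum.inter_filter)
  qed
  also have "\<dots> = (\<Sum>S\<in>cliques n E r. \<Sum>i<n. if i \<in> S then (\<Prod>j\<in>S. y j) else 0)"
    by (rule sum.swap)
  also have "\<dots> = (\<Sum>S\<in>cliques n E r. real r * (\<Prod>j\<in>S. y j))"
  proof (rule sum.cong[OF refl])
    fix S assume S: "S \<in> cliques n E r"
    have Sn: "S \<subseteq> {..<n}" using S unfolding cliques_def is_clique_def by auto
    have "(\<Sum>i<n. if i \<in> S then (\<Prod>j\<in>S. y j) else 0) = (\<Sum>i\<in>S. (\<Prod>j\<in>S. y j))"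
      using Sn by (simp add: sum.If_cases Int_absorb1 inf.absorb2)
    also have "\<dots> = real r * (\<Prod>j\<in>S. y j)" using cliques_card[OF S] by simp
    finally show "(\<Sum>i<n. if i \<in> S then (\<Prod>j\<in>S. y j) else 0) = real r * (\<Prod>j\<in>S. y j)" .
  qed
  also have "\<dots> = real r * Pc n E r y" unfolding Pc_def by (simp add: sum_distrib_left)
  finally show ?thesis .
qed

definition Sph :: "nat \<Rightarrow> nat \<Rightarrow> (nat \<Rightarrow> real) set" where
  "Sph n r = {y. (\<forall>i. 0 \<le> y i) \<and> (\<forall>i. n \<le> i \<longrightarrow> y i = 0) \<and> (\<Sum>i<n. y i ^ r) = 1}"

lemma Dv_cong: "(\<And>j. j < n \<Longrightarrow> y j = y' j) \<Longrightarrow> Dv n E r y i = Dv n E r y' i"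
  unfolding Dv_def
  by (intro sum.cong refl prod.cong) (auto simp: cliques_def is_clique_def)

lemma Pc_cong: "(\<And>j. j < n \<Longrightarrow> y j = y' j) \<Longrightarrow> Pc n E r y = Pc n E r y'"
  unfolding Pc_def
  by (intro sum.cong refl prod.cong) (auto simp: cliques_def is_clique_def)

lemma Sph_compact: assumes r: "r \<ge> 1" shows "compact (Sph n r)"
proof -
  define B where "B = Pi UNIV (\<lambda>i. if i < n then {0..1} else {0::real})"
  have "compactin (product_topology (\<lambda>i. euclidean) UNIV) (PiE UNIV (\<lambda>i. if i < n then {0..1} else {0::real}))"
    by (simp add: compactin_PiE)
  then have "compactin euclidean B" unfolding B_def PiE_UNIV_domain by (simp only: euclidean_product_topology)
  then have cB: "compact B" by simp
  have cont: "continuous_on UNIV (\<lambda>y::nat\<Rightarrow>real. \<Sum>i<n. y i ^ r)"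
    by (intro continuous_on_sum continuous_on_power) simp
  have cl: "closed {y::nat\<Rightarrow>real. (\<Sum>i<n. y i ^ r) = 1}"
    by (rule closed_Collect_eq[OF cont continuous_on_const])
  have "Sph n r = B \<inter> {y. (\<Sum>i<n. y i ^ r) = 1}"
  proof (intro set_eqI iffI)
    fix y assume y: "y \<in> Sph n r"
    have "y i \<le> 1" if i: "i < n" for i
    proof -
      have "y i ^ r \<le> (\<Sum>i<n. y i ^ r)" by (rule member_le_sum) (use i y in \<open>auto simp: Sph_def\<close>)
      then have "y i ^ r \<le> 1" using y by (simp add: Sph_def)
      then show ?thesis using r y by (simp add: Sph_def power_le_one_iff)
    qed
    then show "y \<in> B \<inter> {y. (\<Sum>i<n. y i ^ r) = 1}" using y by (auto simp: Sph_def B_def not_less)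
  next
    fix y assume "y \<in> B \<inter> {y. (\<Sum>i<n. y i ^ r) = 1}"
    then have yB: "\<And>i. y i \<in> (if i < n then {0..1} else {0})" and ys: "(\<Sum>i<n. y i ^ r) = 1"
      unfolding B_def by (auto simp only: Pi_iff Int_iff mem_Collect_eq) 
    have "\<And>i. 0 \<le> y i"
    proof -
      fix i show "0 \<le> y i" using yB[of i] by (cases "i < n") auto
    qed
    moreover have "\<And>i. n \<le> i \<Longrightarrow> y i = 0" using yB by (metis not_le singletonD)
    ultimately show "y \<in> Sph n r" unfolding Sph_def using ys by auto
  qed
  then show ?thesis using cB cl by auto
qed

lemma Sph_nonempty: assumes "n \<ge> 1" "r \<ge> 1" shows "(\<lambda>i. if i = 0 then 1 else 0) \<in> Sph n r"
proof -
  have "(\<lambda>i. (if i = 0 then 1 else (0::real))^r) = (\<lambda>i. if i = 0 then 1 else 0)" using assms(2) by (auto simp: fun_eq_iff)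
  have "(\<Sum>i<n. (if i = 0 then 1 else (0::real))^r) = (\<Sum>i<n. if i = 0 then 1 else 0)"
    by (rule sum.cong) (use assms(2) in auto)
  also have "\<dots> = 1" using assms(1) by (subst sum.delta) auto
  finally show ?thesis unfolding Sph_def using assms(1) by auto
qed

lemma Pc_cont: "continuous_on S (Pc n E r)"
  unfolding Pc_def[abs_def]
  by (intro continuous_on_sum continuous_on_prod) (simp add: continuous_on_subset[OF continuous_on_product_coordinates])

lemma Sph_max:
  assumes "n \<ge> 1" "r \<ge> 1"
  shows "\<exists>y\<in>Sph n r. \<forall>z\<in>Sph n r. Pc n E r z \<le> Pc n E r y"
  using continuous_attains_sup[OF Sph_compact[OF assms(2)] _ Pc_cont] Sph_nonempty[OF assms(1) assms(2)] by blast

lemma normalize_Sph: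
  assumes r: "r \<ge> 1" and a0: "\<And>i. a i \<ge> 0" and an: "\<And>i. n \<le> i \<Longrightarrow> a i = 0"
    and N: "(\<Sum>i<n. a i ^ r) > 0"
  shows "(\<lambda>i. inverse (root r (\<Sum>i<n. a i ^ r)) * a i) \<in> Sph n r"
    and "Pc n E r (\<lambda>i. inverse (root r (\<Sum>i<n. a i ^ r)) * a i) = Pc n E r a / (\<Sum>i<n. a i ^ r)"
proof -
  define N where "N = (\<Sum>i<n. a i ^ r)"
  define s where "s = inverse (root r N)"
  have rN: "root r N ^ r = N" using N r unfolding N_def by (simp add: real_root_pow_pos2)
  have s0: "s \<ge> 0" unfolding s_def using N by (simp add: N_def real_root_ge_zero)
  have sr: "s ^ r = inverse N" unfolding s_def using rN by (simp add: power_inverse)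
  show "(\<lambda>i. inverse (root r (\<Sum>i<n. a i ^ r)) * a i) \<in> Sph n r"
    unfolding N_def[symmetric] s_def[symmetric] Sph_def
  proof (intro CollectI conjI allI impI)
    fix i show "0 \<le> s * a i" using s0 a0 by simp
  next
    fix i assume "n \<le> i" then show "s * a i = 0" using an by simp
  next
    have "(\<Sum>i<n. (s * a i) ^ r) = s ^ r * N" unfolding N_def by (simp add: power_mult_distrib sum_distrib_left)
    then show "(\<Sum>i<n. (s * a i) ^ r) = 1" using sr N by (simp add: N_def)
  qed
  show "Pc n E r (\<lambda>i. inverse (root r (\<Sum>i<n. a i ^ r)) * a i) = Pc n E r a / (\<Sum>i<n. a i ^ r)"
    unfolding N_def[symmetric] s_def[symmetric] Pc_scale sr by (simp add: field_simps)
qed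

lemma eig_bound:
  assumes r: "r \<ge> 1" and ev: "clique_eigenvalue n E r \<mu>"
  shows "\<exists>y\<in>Sph n r. cmod \<mu> \<le> real r * Pc n E r y"
proof -
  obtain x where nz: "\<exists>i<n. x i \<noteq> 0" and eq: "\<forall>i<n. tensor_apply n E r x i = \<mu> * x i ^ (r - 1)"
    using ev unfolding clique_eigenvalue_def by blast
  define a where "a i = (if i < n then cmod (x i) else 0)" for i
  have a0: "\<And>i. a i \<ge> 0" and an: "\<And>i. n \<le> i \<Longrightarrow> a i = 0" unfolding a_def by auto
  have le: "cmod \<mu> * a i ^ r \<le> a i * Dv n E r a i" if i: "i < n" for i
  proof -
    have "cmod \<mu> * a i ^ (r - 1) = cmod (tensor_apply n E r x i)"
      using eq i by (simp add: a_def norm_mult norm_power)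
    also have "\<dots> = cmod (Dv n E r x i)" using tensor_apply_eq[OF r] by simp
    also have "\<dots> \<le> Dv n E r (\<lambda>j. cmod (x j)) i" by (rule Dv_norm)
    also have "\<dots> = Dv n E r a i" by (rule Dv_cong) (simp add: a_def)
    finally have "cmod \<mu> * a i ^ (r - 1) \<le> Dv n E r a i" .
    then have "a i * (cmod \<mu> * a i ^ (r - 1)) \<le> a i * Dv n E r a i" using a0 by (simp add: mult_left_mono)
    moreover have "a i * (cmod \<mu> * a i ^ (r - 1)) = cmod \<mu> * a i ^ r"
      using r by (cases r) auto
    ultimately show ?thesis by linarith
  qed
  have "cmod \<mu> * (\<Sum>i<n. a i ^ r) \<le> (\<Sum>i<n. a i * Dv n E r a i)"
    unfolding sum_distrib_left by (rule sum_mono) (use le in auto)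
  also have "\<dots> = real r * Pc n E r a" by (rule sum_y_Dv)
  finally have key: "cmod \<mu> * (\<Sum>i<n. a i ^ r) \<le> real r * Pc n E r a" .
  have N: "(\<Sum>i<n. a i ^ r) > 0"
  proof -
    obtain i where i: "i < n" "x i \<noteq> 0" using nz by blast
    have "a i ^ r > 0" using i by (simp add: a_def)
    moreover have "a i ^ r \<le> (\<Sum>i<n. a i ^ r)" by (rule member_le_sum) (use i a0 in auto)
    ultimately show ?thesis by linarith
  qed
  note ns = normalize_Sph(1)[OF r a0 an N] normalize_Sph(2)[OF r a0 an N, of E]
  show ?thesis
  proof (intro bexI[OF _ ns(1)])
    show "cmod \<mu> \<le> real r * Pc n E r (\<lambda>i. inverse (root r (\<Sum>i<n. a i ^ r)) * a i)"
    proof -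
      have h1: "cmod \<mu> \<le> real r * Pc n E r a / (\<Sum>i<n. a i ^ r)" using key N by (simp add: le_divide_eq)
      show ?thesis using h1 ns(2) by simp
    qed
  qed
qed

lemma eig_exists:
  assumes r: "r \<ge> 2" and y: "y \<in> Sph n r" and ymax: "\<forall>z\<in>Sph n r. Pc n E r z \<le> Pc n E r y"
  shows "clique_eigenvalue n E r (complex_of_real (real r * Pc n E r y))"
proof -
  define \<rho> where "\<rho> = real r * Pc n E r y"
  have y0: "\<And>i. y i \<ge> 0" and yn: "\<And>i. n \<le> i \<Longrightarrow> y i = 0" and y1: "(\<Sum>i<n. y i ^ r) = 1"
    using y unfolding Sph_def by auto
  have rho0: "\<rho> \<ge> 0" unfolding \<rho>_def using Pc_nonneg[OF y0] by simp
  have r1: "r \<ge> 1" using r by simp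
  have kkt0: "real r * \<delta> * Dv n E r y k \<le> \<rho> * ((y k + \<delta>)^r - y k ^ r)"
    if k: "k < n" and d: "y k + \<delta> > 0" for k \<delta>
  proof -
    define z where "z = y(k := y k + \<delta>)"
    have z0: "\<And>i. z i \<ge> 0" unfolding z_def using y0 d by (auto intro: less_imp_le)
    have zn: "\<And>i. n \<le> i \<Longrightarrow> z i = 0" unfolding z_def using yn k by auto
    have Nz: "(\<Sum>i<n. z i ^ r) = 1 - y k ^ r + (y k + \<delta>)^r"
    proof -
      have "(\<Sum>i<n. z i ^ r) = z k ^ r + (\<Sum>i\<in>{..<n} - {k}. z i ^ r)"
        using k by (simp add: sum.remove)
      moreover have "(\<Sum>i<n. y i ^ r) = y k ^ r + (\<Sum>i\<in>{..<n} - {k}. y i ^ r)"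
        using k by (simp add: sum.remove)
      moreover have "(\<Sum>i\<in>{..<n} - {k}. z i ^ r) = (\<Sum>i\<in>{..<n} - {k}. y i ^ r)"
        by (rule sum.cong) (auto simp: z_def)
      ultimately show ?thesis using y1 by (simp add: z_def)
    qed
    have Npos: "(\<Sum>i<n. z i ^ r) > 0"
    proof -
      have "z k ^ r > 0" using d by (simp add: z_def)
      moreover have "z k ^ r \<le> (\<Sum>i<n. z i ^ r)" by (rule member_le_sum) (use k z0 in auto)
      ultimately show ?thesis by linarith
    qed
    note ns = normalize_Sph(1)[OF r1 z0 zn Npos] normalize_Sph(2)[OF r1 z0 zn Npos, of E]
    have "Pc n E r z / (\<Sum>i<n. z i ^ r) \<le> Pc n E r y" using ymax ns by metis
    then have "Pc n E r z \<le> Pc n E r y * (\<Sum>i<n. z i ^ r)" using Npos by (simp add: divide_le_eq)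
    moreover have "Pc n E r z = Pc n E r y + \<delta> * Dv n E r y k" unfolding z_def by (rule Pc_update)
    ultimately have "Pc n E r y + \<delta> * Dv n E r y k \<le> Pc n E r y * (1 - y k ^ r + (y k + \<delta>)^r)"
      using Nz by simp
    then have "\<delta> * Dv n E r y k \<le> Pc n E r y * ((y k + \<delta>)^r - y k ^ r)" by (simp add: algebra_simps)
    then have "real r * (\<delta> * Dv n E r y k) \<le> real r * (Pc n E r y * ((y k + \<delta>)^r - y k ^ r))"
      by (simp add: mult_left_mono)
    then show ?thesis unfolding \<rho>_def by (simp add: algebra_simps)
  qed
  have kkt: "Dv n E r y k = \<rho> * y k ^ (r - 1)" if k: "k < n" for k
  proof (cases "y k > 0")
    case True
    define \<phi> where "\<phi> \<delta> = real r * \<delta> * Dv n E r y k - \<rho> * ((y k + \<delta>)^r - y k ^ r)" for \<delta>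
    have der: "DERIV \<phi> 0 :> real r * Dv n E r y k - \<rho> * (real r * y k ^ (r - 1))"
      unfolding \<phi>_def by (rule derivative_eq_intros refl | simp)+
    have "real r * Dv n E r y k - \<rho> * (real r * y k ^ (r - 1)) = 0"
    proof (rule DERIV_local_max[OF der True])
      show "\<forall>h. \<bar>0 - h\<bar> < y k \<longrightarrow> \<phi> h \<le> \<phi> 0"
      proof (intro allI impI)
        fix h assume "\<bar>0 - h\<bar> < y k"
        then have "y k + h > 0" by linarith
        then show "\<phi> h \<le> \<phi> 0" using kkt0[OF k] unfolding \<phi>_def by simp
      qed
    qed
    then show ?thesis using r by (simp add: algebra_simps)
  next
    case False
    then have yk: "y k = 0" using y0[of k] by simp
    have D0: "Dv n E r y k \<ge> 0" by (rule Dv_nonneg[OF y0])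
    have "Dv n E r y k \<le> 0"
    proof (rule ccontr)
      assume "\<not> ?thesis"
      then have Dp: "Dv n E r y k > 0" by simp
      define \<delta> where "\<delta> = min 1 (Dv n E r y k / (\<rho> + 1))"
      have dp: "\<delta> > 0" and d1: "\<delta> \<le> 1" unfolding \<delta>_def using Dp rho0 by auto
      have dle: "\<delta> \<le> Dv n E r y k / (\<rho> + 1)" unfolding \<delta>_def by simp
      have "real r * \<delta> * Dv n E r y k \<le> \<rho> * \<delta> ^ r" using kkt0[OF k, of \<delta>] yk dp r by (simp add: power_0_left)
      moreover have "\<delta> ^ r \<le> \<delta> * \<delta>"
      proof -
        obtain m where m: "r = Suc (Suc m)" using r by (metis add_2_eq_Suc le_Suc_ex)
        have "\<delta> ^ r = \<delta> * \<delta> * \<delta> ^ (r - 2)" unfolding m by simp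
        also have "\<dots> \<le> \<delta> * \<delta> * 1" using dp d1 by (intro mult_left_mono power_le_one) auto
        finally show ?thesis by simp
      qed
      ultimately have "real r * \<delta> * Dv n E r y k \<le> \<rho> * (\<delta> * \<delta>)"
        using rho0 by (smt (verit) mult_left_mono)
      moreover have "\<rho> * \<delta> < Dv n E r y k"
      proof -
        have "\<rho> * \<delta> \<le> \<rho> * (Dv n E r y k / (\<rho> + 1))" using dle rho0 by (rule mult_left_mono)
        also have "\<dots> < Dv n E r y k" using Dp rho0 by (simp add: field_simps)
        finally show ?thesis .
      qed
      moreover have "Dv n E r y k \<le> real r * Dv n E r y k" using Dp r by simp
      ultimately have "real r * \<delta> * Dv n E r y k < real r * \<delta> * Dv n E r y k"
      proof -
        assume a1: "real r * \<delta> * Dv n E r y k \<le> \<rho> * (\<delta> * \<delta>)" and a2: "\<rho> * \<delta> < Dv n E r y k"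
          and a3: "Dv n E r y k \<le> real r * Dv n E r y k"
        have "\<rho> * (\<delta> * \<delta>) = \<delta> * (\<rho> * \<delta>)" by simp
        also have "\<dots> < \<delta> * Dv n E r y k" using a2 dp by simp
        also have "\<dots> \<le> \<delta> * (real r * Dv n E r y k)" using a3 dp by simp
        finally show ?thesis using a1 by (simp add: algebra_simps)
      qed
      then show False by simp
    qed
    then show ?thesis using D0 yk r by simp
  qed
  show ?thesis
    unfolding clique_eigenvalue_def
  proof (intro exI[of _ "\<lambda>j. complex_of_real (y j)"] conjI allI impI)
    show "\<exists>i<n. complex_of_real (y i) \<noteq> 0"
    proof (rule ccontr)
      assume "\<not> ?thesis"
      then have "\<And>i. i < n \<Longrightarrow> y i = 0" by auto
      then have "(\<Sum>i<n. y i ^ r) = 0" using r by simp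
      then show False using y1 by simp
    qed
  next
    fix i assume i: "i < n"
    have "tensor_apply n E r (\<lambda>j. complex_of_real (y j)) i = complex_of_real (Dv n E r y i)"
      using tensor_apply_eq[OF r1] Dv_of_real by simp
    also have "\<dots> = complex_of_real (\<rho> * y i ^ (r - 1))" using kkt[OF i] by simp
    finally show "tensor_apply n E r (\<lambda>j. complex_of_real (y j)) i = complex_of_real (real r * Pc n E r y) * complex_of_real (y i) ^ (r - 1)"
      unfolding \<rho>_def by simp
  qed
qed

lemma csr_max:
  assumes n: "n \<ge> 1" and r: "r \<ge> 2" and y: "y \<in> Sph n r" and ymax: "\<forall>z\<in>Sph n r. Pc n E r z \<le> Pc n E r y"
  shows "clique_spectral_radius n E r = real r * Pc n E r y"
proof -
  have r1: "r \<ge> 1" using r by simp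
  have y0: "\<And>i. y i \<ge> 0" using y unfolding Sph_def by auto
  have rho0: "real r * Pc n E r y \<ge> 0" using Pc_nonneg[OF y0] by simp
  have ev: "clique_eigenvalue n E r (complex_of_real (real r * Pc n E r y))" by (rule eig_exists[OF r y ymax])
  show ?thesis unfolding clique_spectral_radius_def
  proof (rule cSup_eq_maximum)
    show "real r * Pc n E r y \<in> cmod ` {\<mu>. clique_eigenvalue n E r \<mu>}"
    proof (rule image_eqI[of _ _ "complex_of_real (real r * Pc n E r y)"])
      show "real r * Pc n E r y = cmod (complex_of_real (real r * Pc n E r y))"
        using rho0 by (simp only: norm_of_real abs_of_nonneg)
    qed (use ev in simp)
    fix v assume "v \<in> cmod ` {\<mu>. clique_eigenvalue n E r \<mu>}"
    then obtain \<mu> where v: "v = cmod \<mu>" and "clique_eigenvalue n E r \<mu>" by auto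
    then obtain y' where "y' \<in> Sph n r" "cmod \<mu> \<le> real r * Pc n E r y'" using eig_bound[OF r1] by blast
    moreover have "Pc n E r y' \<le> Pc n E r y" using ymax \<open>y' \<in> Sph n r\<close> by blast
    ultimately show "v \<le> real r * Pc n E r y" using v by (smt (verit) mult_left_mono of_nat_0_le_iff)
  qed
qed

lemma csr_upper:
  assumes n: "n \<ge> 1" and r: "r \<ge> 2" and B: "\<And>y. y \<in> Sph n r \<Longrightarrow> real r * Pc n E r y \<le> B"
  shows "clique_spectral_radius n E r \<le> B"
proof -
  obtain y where "y \<in> Sph n r" "\<forall>z\<in>Sph n r. Pc n E r z \<le> Pc n E r y" using Sph_max[OF n, of r E] r by auto
  then show ?thesis using csr_max[OF n r] B by simp
qed

lemma csr_lower:
  assumes n: "n \<ge> 1" and r: "r \<ge> 2" and y: "y \<in> Sph n r"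
  shows "real r * Pc n E r y \<le> clique_spectral_radius n E r"
proof -
  obtain y' where y': "y' \<in> Sph n r" "\<forall>z\<in>Sph n r. Pc n E r z \<le> Pc n E r y'" using Sph_max[OF n, of r E] r by auto
  then have "Pc n E r y \<le> Pc n E r y'" using y by blast
  then show ?thesis using csr_max[OF n r y'(1) y'(2)] by (simp add: mult_left_mono)
qed

lemma Pc_le_esym:
  assumes y0: "\<And>i. y i \<ge> 0"
  shows "Pc n E r y \<le> esym {0..<n} r y"
  unfolding Pc_def esym_def
  by (rule sum_mono2) (auto simp: cliques_def is_clique_def ksub_def intro!: prod_nonneg y0)

lemma Pc_le_pow:
  assumes y0: "\<And>i. y i \<ge> 0"
  shows "Pc n E r y \<le> (\<Sum>i<n. y i) ^ r"
proof -
  have "Pc n E r y \<le> esym {0..<n} r y" by (rule Pc_le_esym[OF y0])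
  also have "\<dots> \<le> (\<Sum>i\<in>{0..<n}. y i) ^ r" by (rule esym_le_pow) (use y0 in auto)
  finally show ?thesis by (simp add: atLeast0LessThan)
qed

lemma Sph_sum_pow:
  assumes y: "y \<in> Sph n r" and r: "r \<ge> 1"
  shows "(\<Sum>i<n. y i) ^ r \<le> real n ^ (r - 1)"
proof -
  have "(\<Sum>i<n. y i) ^ r \<le> real (card {..<n}) ^ (r - 1) * (\<Sum>i<n. y i ^ r)"
    by (rule power_mean) (use y r in \<open>auto simp: Sph_def\<close>)
  then show ?thesis using y by (simp add: Sph_def)
qed

lemma heavy_sum:
  assumes y: "y \<in> Sph n r" and r: "r \<ge> 1" and tau: "\<tau> > 0"
  shows "(\<Sum>i<n. if y i > \<tau> then y i else 0) * \<tau> ^ (r - 1) \<le> 1"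
proof -
  have "(\<Sum>i<n. if y i > \<tau> then y i else 0) * \<tau> ^ (r - 1) = (\<Sum>i<n. (if y i > \<tau> then y i else 0) * \<tau> ^ (r - 1))"
    by (simp add: sum_distrib_right)
  also have "\<dots> \<le> (\<Sum>i<n. y i ^ r)"
  proof (rule sum_mono)
    fix i
    have yi: "y i \<ge> 0" using y by (auto simp: Sph_def)
    show "(if y i > \<tau> then y i else 0) * \<tau> ^ (r - 1) \<le> y i ^ r"
    proof (cases "y i > \<tau>")
      case True
      have "y i * \<tau> ^ (r - 1) \<le> y i * y i ^ (r - 1)"
        using True tau yi by (intro mult_left_mono power_mono) auto
      also have "\<dots> = y i ^ r" using r by (cases r) auto
      finally show ?thesis using True by simp
    qed (use yi in auto)
  qed
  also have "\<dots> = 1" using y by (simp add: Sph_def)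
  finally show ?thesis .
qed

lemma heavy_Q:
  assumes tau: "\<tau> > 0" and y0: "\<And>i. y i \<ge> 0"
  shows "Pc n E (Suc r) y \<le> \<tau> ^ Suc r * real (card (cliques n E (Suc r)))
           + (\<Sum>i<n. if y i > \<tau> then y i else 0) * (\<Sum>i<n. y i) ^ r"
proof -
  define h where "h i = (if y i > \<tau> then y i else 0)" for i
  define W where "W = {0..<n}"
  have fW: "finite W" unfolding W_def by simp
  have h0: "\<And>i. h i \<ge> 0" unfolding h_def using y0 by auto
  have pt: "(\<Prod>i\<in>T. y i) \<le> \<tau> ^ Suc r + (\<Sum>v\<in>T. h v * (\<Prod>i\<in>T - {v}. y i))"
    if T: "T \<in> cliques n E (Suc r)" for T
  proof (cases "\<forall>i\<in>T. y i \<le> \<tau>")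
    case True
    have "(\<Prod>i\<in>T. y i) \<le> (\<Prod>i\<in>T. \<tau>)" by (rule prod_mono) (use True y0 in auto)
    also have "\<dots> = \<tau> ^ Suc r" using cliques_card[OF T] by simp
    finally show ?thesis using h0 y0 by (smt (verit) prod_nonneg sum_nonneg mult_nonneg_nonneg)
  next
    case False
    then obtain v where v: "v \<in> T" "y v > \<tau>" by auto
    have fT: "finite T" using cliques_fin[OF T] .
    have "(\<Prod>i\<in>T. y i) = h v * (\<Prod>i\<in>T - {v}. y i)" using v fT by (simp add: h_def prod.remove)
    also have "\<dots> \<le> (\<Sum>v\<in>T. h v * (\<Prod>i\<in>T - {v}. y i))"
      by (rule member_le_sum) (use v fT h0 y0 in \<open>auto intro!: mult_nonneg_nonneg prod_nonneg\<close>)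
    moreover have "\<tau> ^ Suc r \<ge> 0" using tau by simp
    ultimately show ?thesis by linarith
  qed
  have "Pc n E (Suc r) y \<le> (\<Sum>T\<in>cliques n E (Suc r). \<tau> ^ Suc r + (\<Sum>v\<in>T. h v * (\<Prod>i\<in>T - {v}. y i)))"
    unfolding Pc_def by (rule sum_mono) (rule pt)
  also have "\<dots> = \<tau> ^ Suc r * real (card (cliques n E (Suc r))) + (\<Sum>T\<in>cliques n E (Suc r). \<Sum>v\<in>T. h v * (\<Prod>i\<in>T - {v}. y i))"
    by (simp add: sum.distrib)
  also have "(\<Sum>T\<in>cliques n E (Suc r). \<Sum>v\<in>T. h v * (\<Prod>i\<in>T - {v}. y i)) \<le> (\<Sum>T\<in>ksub W (Suc r). \<Sum>v\<in>T. h v * (\<Prod>i\<in>T - {v}. y i))"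
    by (rule sum_mono2) (use fW h0 y0 in \<open>auto simp: W_def cliques_def is_clique_def ksub_def intro!: sum_nonneg mult_nonneg_nonneg prod_nonneg\<close>)
  also have "\<dots> = (\<Sum>v\<in>W. \<Sum>T\<in>ksub (W - {v}) r. h v * (\<Prod>i\<in>T. y i))"
    by (rule dcount[OF fW, where f="\<lambda>v T. h v * (\<Prod>i\<in>T. y i)"])
  also have "\<dots> = (\<Sum>v\<in>W. h v * esym (W - {v}) r y)"
    unfolding esym_def by (simp add: sum_distrib_left)
  also have "\<dots> \<le> (\<Sum>v\<in>W. h v * (\<Sum>i\<in>W. y i) ^ r)"
  proof (rule sum_mono)
    fix v assume v: "v \<in> W"
    have "esym (W - {v}) r y \<le> esym W r y" by (rule esym_mono_set) (use fW y0 in auto)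
    also have "\<dots> \<le> (\<Sum>i\<in>W. y i) ^ r" by (rule esym_le_pow) (use fW y0 in auto)
    finally show "h v * esym (W - {v}) r y \<le> h v * (\<Sum>i\<in>W. y i) ^ r" using h0 by (simp add: mult_left_mono)
  qed
  also have "\<dots> = (\<Sum>i<n. h i) * (\<Sum>i<n. y i) ^ r"
    unfolding W_def by (simp add: sum_distrib_right atLeast0LessThan)
  finally show ?thesis unfolding h_def by simp
qed

lemma supersat_scaled:
  fixes y :: "nat \<Rightarrow> real"
  assumes y0: "\<And>i. y i \<ge> 0" and s: "(\<Sum>i<n. y i) > 0" and th: "\<theta> > 0"
  shows "Pc n E (Suc k) y \<le> (1 / real (Suc k) ^ Suc k + \<theta>) * (\<Sum>i<n. y i) ^ Suc k
     + real (Suc (Suc k)) / \<theta> * Pc n E (Suc (Suc k)) y / (\<Sum>i<n. y i)"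
proof -
  define S where "S = (\<Sum>i<n. y i)"
  define z where "z i = inverse S * y i" for i
  have z0: "\<And>i. i < n \<Longrightarrow> z i \<ge> 0" using y0 s by (simp add: z_def S_def)
  have z1: "(\<Sum>i<n. z i) = 1" using s by (simp add: z_def S_def sum_distrib_left[symmetric])
  have "Pc n E (Suc k) z \<le> 1 / real (Suc k) ^ Suc k + \<theta> + real (Suc (Suc k)) / \<theta> * Pc n E (Suc (Suc k)) z"
    by (rule supersat[OF z0 z1 th])
  moreover have "Pc n E (Suc k) z = inverse S ^ Suc k * Pc n E (Suc k) y"
    unfolding z_def by (rule Pc_scale)
  moreover have "Pc n E (Suc (Suc k)) z = inverse S ^ Suc (Suc k) * Pc n E (Suc (Suc k)) y"
    unfolding z_def by (rule Pc_scale)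
  ultimately have "inverse S ^ Suc k * Pc n E (Suc k) y \<le> 1 / real (Suc k) ^ Suc k + \<theta> + real (Suc (Suc k)) / \<theta> * (inverse S ^ Suc (Suc k) * Pc n E (Suc (Suc k)) y)"
    by simp
  then have "S ^ Suc k * (inverse S ^ Suc k * Pc n E (Suc k) y) \<le> S ^ Suc k * (1 / real (Suc k) ^ Suc k + \<theta> + real (Suc (Suc k)) / \<theta> * (inverse S ^ Suc (Suc k) * Pc n E (Suc (Suc k)) y))"
    using s by (intro mult_left_mono) (auto simp: S_def)
  also have "S ^ Suc k * (inverse S ^ Suc k * Pc n E (Suc k) y) = (S * inverse S) ^ Suc k * Pc n E (Suc k) y"
    by (simp only: power_mult_distrib mult.assoc)
  also have "\<dots> = Pc n E (Suc k) y"
    using s by (simp add: S_def)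
  also have "S ^ Suc k * (1 / real (Suc k) ^ Suc k + \<theta> + real (Suc (Suc k)) / \<theta> * (inverse S ^ Suc (Suc k) * Pc n E (Suc (Suc k)) y))
     = (1 / real (Suc k) ^ Suc k + \<theta>) * S ^ Suc k + real (Suc (Suc k)) / \<theta> * Pc n E (Suc (Suc k)) y / S"
  proof -
    have Sp: "S > 0" using s by (simp add: S_def)
    have e1: "S ^ Suc k * inverse S ^ Suc (Suc k) = inverse S"
    proof -
      have "S ^ Suc k * inverse S ^ Suc (Suc k) = (S * inverse S) ^ Suc k * inverse S"
        by (simp only: power_mult_distrib power_Suc mult_ac)
      then show ?thesis using Sp by simp
    qed
    have "S ^ Suc k * (1 / real (Suc k) ^ Suc k + \<theta> + real (Suc (Suc k)) / \<theta> * (inverse S ^ Suc (Suc k) * Pc n E (Suc (Suc k)) y))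
      = (1 / real (Suc k) ^ Suc k + \<theta>) * S ^ Suc k + real (Suc (Suc k)) / \<theta> * Pc n E (Suc (Suc k)) y * (S ^ Suc k * inverse S ^ Suc (Suc k))"
      by (simp only: distrib_left mult_ac)
    also have "\<dots> = (1 / real (Suc k) ^ Suc k + \<theta>) * S ^ Suc k + real (Suc (Suc k)) / \<theta> * Pc n E (Suc (Suc k)) y / S"
      unfolding e1 by (simp add: divide_inverse)
    finally show ?thesis .
  qed
  finally show ?thesis unfolding S_def .
qed

lemma upper_arith:
  fixes k :: nat and n \<nu> s P Q cnt hs C \<delta> \<theta> K \<epsilon> :: real
  assumes k: "k \<ge> 1" and n: "n > 0" and nu: "\<nu> > 0" "\<nu> ^ Suc k = n"
    and s0: "s \<ge> 0" and sle: "s ^ Suc k \<le> n ^ k"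
    and Ple: "P \<le> s ^ Suc k"
    and Psup: "s > 0 \<Longrightarrow> P \<le> (1 / real (Suc k) ^ Suc k + \<theta>) * s ^ Suc k + K * Q / s"
    and Qle: "Q \<le> (C / \<nu>) ^ Suc (Suc k) * cnt + hs * s ^ Suc k"
    and cnt: "cnt \<le> \<delta> * n ^ Suc (Suc k)"
    and hs: "hs * (C / \<nu>) ^ k \<le> 1" "hs \<ge> 0"
    and C: "C \<ge> 1" and K: "K \<ge> 0" and d: "\<delta> \<ge> 0" and th: "\<theta> \<ge> 0"
  shows "real (Suc k) * P \<le> (1 / real (Suc k) ^ k + real (Suc k) * \<theta> + real (Suc k) * K * (C ^ Suc (Suc k) * \<delta> * real (Suc k) + 1 / C)) * n ^ k"
proof -
  define r where "r = real (Suc k)"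
  have r0: "r \<ge> 1" unfolding r_def by simp
  define \<sigma> where "\<sigma> = \<nu> ^ k"
  have sig0: "\<sigma> > 0" unfolding \<sigma>_def using nu by simp
  have signu: "\<sigma> * \<nu> = n" unfolding \<sigma>_def using nu by (simp add: mult.commute)
  have sigpow: "\<sigma> ^ Suc k = n ^ k"
    unfolding \<sigma>_def using nu(2) by (metis power_mult mult.commute)
  have sles: "s \<le> \<sigma>"
    using sle sigpow sig0 by (intro power_le_imp_le_base[of s k \<sigma>]) auto
  have nk0: "n ^ k \<ge> 0" using n by simp
  have extra0: "real (Suc k) * \<theta> * n ^ k + real (Suc k) * K * (C ^ Suc (Suc k) * \<delta> * real (Suc k) + 1 / C) * n ^ k \<ge> 0"
  proof -
    have "real (Suc k) * \<theta> * n ^ k \<ge> 0" using th n by simp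
    moreover have "C ^ Suc (Suc k) * \<delta> * real (Suc k) + 1 / C \<ge> 0" using C d by simp
    then have "real (Suc k) * K * (C ^ Suc (Suc k) * \<delta> * real (Suc k) + 1 / C) * n ^ k \<ge> 0" using K n by simp
    ultimately show ?thesis by linarith
  qed
  show ?thesis
  proof (cases "s \<le> \<sigma> / r")
    case True
    have "real (Suc k) * P \<le> r * s ^ Suc k" using Ple unfolding r_def by (simp add: mult_left_mono)
    also have "\<dots> \<le> r * (\<sigma> / r) ^ Suc k" using True s0 r0 by (intro mult_left_mono power_mono) auto
    also have "\<dots> = \<sigma> ^ Suc k / r ^ k" using r0 by (simp add: power_divide field_simps)
    also have "\<dots> = 1 / real (Suc k) ^ k * n ^ k" using sigpow unfolding r_def by simp
    finally show ?thesis using extra0 by (simp add: algebra_simps)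
  next
    case False
    then have sgt: "s > \<sigma> / r" by simp
    then have spos: "s > 0" using sig0 r0 by (smt (verit) divide_pos_pos)
    have invs: "1 / s \<le> r / \<sigma>" using sgt sig0 r0 spos by (simp add: field_simps)
    have Qs: "Q / s \<le> (C / \<nu>) ^ Suc (Suc k) * (\<delta> * n ^ Suc (Suc k)) / s + hs * s ^ k"
    proof -
      have "Q \<le> (C / \<nu>) ^ Suc (Suc k) * (\<delta> * n ^ Suc (Suc k)) + hs * s ^ Suc k"
        using Qle cnt C nu by (smt (verit) mult_left_mono zero_le_power divide_nonneg_nonneg)
      then have "Q / s \<le> ((C / \<nu>) ^ Suc (Suc k) * (\<delta> * n ^ Suc (Suc k)) + hs * s ^ Suc k) / s"
        using spos by (simp add: divide_right_mono)
      also have "\<dots> = (C / \<nu>) ^ Suc (Suc k) * (\<delta> * n ^ Suc (Suc k)) / s + hs * s ^ k"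
        using spos by (simp add: field_simps)
      finally show ?thesis .
    qed
    have E1: "(C / \<nu>) ^ Suc (Suc k) * (\<delta> * n ^ Suc (Suc k)) / s \<le> C ^ Suc (Suc k) * \<delta> * r * n ^ k"
    proof -
      have nn: "0 \<le> (C / \<nu>) ^ Suc (Suc k) * (\<delta> * n ^ Suc (Suc k))" using C nu d n by simp
      have "(C / \<nu>) ^ Suc (Suc k) * (\<delta> * n ^ Suc (Suc k)) / s = (C / \<nu>) ^ Suc (Suc k) * (\<delta> * n ^ Suc (Suc k)) * (1 / s)"
        by simp
      also have "\<dots> \<le> (C / \<nu>) ^ Suc (Suc k) * (\<delta> * n ^ Suc (Suc k)) * (r / \<sigma>)"
        using invs nn by (rule mult_left_mono)
      also have "\<dots> = C ^ Suc (Suc k) * \<delta> * r * (n ^ Suc (Suc k) / (\<nu> ^ Suc (Suc k) * \<sigma>))"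
        by (simp add: power_divide field_simps)
      also have "\<nu> ^ Suc (Suc k) * \<sigma> = n * n"
        unfolding \<sigma>_def using nu(2) by (simp add: power_add[symmetric] mult_ac)
      also have "n ^ Suc (Suc k) / (n * n) = n ^ k" using n by (simp add: field_simps)
      finally show ?thesis .
    qed
    have E2: "hs * s ^ k \<le> (n / C) ^ k"
    proof -
      have tpos: "C / \<nu> > 0" using C nu by simp
      have pm: "(C / \<nu>) ^ k * (s / (C / \<nu>)) ^ k = s ^ k"
        unfolding power_mult_distrib[symmetric] using C nu by simp
      have "hs * s ^ k = (hs * (C / \<nu>) ^ k) * (s / (C / \<nu>)) ^ k"
        unfolding pm[symmetric] by (simp only: mult.assoc)
      also have "\<dots> \<le> 1 * (s / (C / \<nu>)) ^ k"
        using hs tpos s0 by (intro mult_right_mono zero_le_power divide_nonneg_pos) auto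
      also have "\<dots> \<le> (\<sigma> / (C / \<nu>)) ^ k"
        unfolding mult_1_left using sles s0 tpos C nu by (intro power_mono divide_right_mono) auto
      also have "\<sigma> / (C / \<nu>) = n / C" using signu C nu by (simp add: field_simps)
      finally show ?thesis .
    qed
    have E3: "(n / C) ^ k \<le> n ^ k / C"
    proof -
      have "(n / C) ^ k = n ^ k / C ^ k" by (simp add: power_divide)
      also have "\<dots> \<le> n ^ k / C" using C k n by (intro divide_left_mono) (auto simp: power_increasing[of 1 k C, simplified])
      finally show ?thesis .
    qed
    have "real (Suc k) * P \<le> r * ((1 / r ^ Suc k + \<theta>) * s ^ Suc k + K * Q / s)"
      using Psup[OF spos] unfolding r_def by (simp add: mult_left_mono)
    also have "\<dots> \<le> r * ((1 / r ^ Suc k + \<theta>) * n ^ k + K * (C ^ Suc (Suc k) * \<delta> * r * n ^ k + n ^ k / C))"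
    proof (rule mult_left_mono, rule add_mono)
      show "(1 / r ^ Suc k + \<theta>) * s ^ Suc k \<le> (1 / r ^ Suc k + \<theta>) * n ^ k"
        using sle th r0 by (intro mult_left_mono) auto
      have "K * Q / s = K * (Q / s)" by simp
      also have "\<dots> \<le> K * (C ^ Suc (Suc k) * \<delta> * r * n ^ k + n ^ k / C)"
        using Qs E1 E2 E3 K by (intro mult_left_mono) auto
      finally show "K * Q / s \<le> K * (C ^ Suc (Suc k) * \<delta> * r * n ^ k + n ^ k / C)" .
    qed (use r0 in auto)
    also have "\<dots> = (r * (1 / r ^ Suc k) + r * \<theta> + r * K * (C ^ Suc (Suc k) * \<delta> * r + 1 / C)) * n ^ k"
      by (simp add: algebra_simps)
    also have "r * (1 / r ^ Suc k) = 1 / r ^ k" using r0 by simp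
    finally show ?thesis unfolding r_def[symmetric] .
  qed
qed

lemma aux_c1: "(a::real) > 0 \<Longrightarrow> a * (e / (3 * a)) = e / 3"
  by (simp add: field_simps)

lemma aux_c2: "(a::real) > 0 \<Longrightarrow> K > 0 \<Longrightarrow> D > 0 \<Longrightarrow> a * K * (D * (e / (3 * a * a * K * D)) * a) = e / 3"
  by (simp add: field_simps)

lemma aux_c3: "(a::real) > 0 \<Longrightarrow> C \<ge> 1 \<Longrightarrow> 3 * a * K \<le> C * e \<Longrightarrow> a * K * (1 / C) \<le> e / 3"
  by (simp add: field_simps)

lemma upper_main:
  assumes sg: "simple_graph VH EH" and ch: "chromatic_number VH EH = Suc r" and r: "r \<ge> 2" and e: "\<epsilon> > 0"
  shows "\<exists>N. \<forall>n\<ge>N. \<forall>E. H_free n E VH EH \<longrightarrow>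
           (\<forall>y\<in>Sph n r. real r * Pc n E r y \<le> (1 / real r ^ (r - 1) + \<epsilon>) * real n ^ (r - 1))"
proof -
  obtain k where rk: "r = Suc k" and k: "k \<ge> 1" using r by (cases r) auto
  define \<theta> where "\<theta> = \<epsilon> / (3 * real r)"
  define K where "K = real (Suc (Suc k)) / \<theta>"
  define C where "C = 3 * real r * K / \<epsilon> + 1"
  define \<delta> where "\<delta> = \<epsilon> / (3 * real r * real r * K * C ^ Suc (Suc k))"
  have th0: "\<theta> > 0" unfolding \<theta>_def using e r by simp
  have K0: "K > 0" unfolding K_def using th0 by simp
  have "3 * real r * K / \<epsilon> \<ge> 0" using K0 e by simp
  then have C1: "C \<ge> 1" unfolding C_def by linarith
  have "3 * real r * real r * K * C ^ Suc (Suc k) > 0" using r K0 C1 by simp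
  then have d0: "\<delta> > 0" unfolding \<delta>_def using e by simp
  obtain N0 where N0: "\<forall>n\<ge>N0. \<forall>E. H_free n E VH EH \<longrightarrow> real (card (cliques n E (Suc r))) < \<delta> * real n ^ Suc r"
    using few_cliques[OF sg ch d0] by blast
  show ?thesis
  proof (intro exI[of _ "max N0 1"] allI impI ballI)
    fix n E y assume nN: "max N0 1 \<le> n" and hf: "H_free n E VH EH" and y: "y \<in> Sph n r"
    have n1: "n \<ge> 1" and nN0: "n \<ge> N0" using nN by auto
    have npos: "real n > 0" using n1 by simp
    define \<nu> where "\<nu> = root (Suc k) (real n)"
    have nu0: "\<nu> > 0" unfolding \<nu>_def using npos by simp
    have nupow: "\<nu> ^ Suc k = real n" unfolding \<nu>_def using npos by (intro real_root_pow_pos2) auto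
    define s where "s = (\<Sum>i<n. y i)"
    have y0: "\<And>i. y i \<ge> 0" using y unfolding Sph_def by auto
    have s0: "s \<ge> 0" unfolding s_def using y0 by (simp add: sum_nonneg)
    have sle: "s ^ Suc k \<le> real n ^ k" unfolding s_def using Sph_sum_pow[OF y] rk by simp
    have Ple: "Pc n E r y \<le> s ^ Suc k" unfolding s_def rk by (rule Pc_le_pow[OF y0])
    have Psup: "s > 0 \<Longrightarrow> Pc n E r y \<le> (1 / real (Suc k) ^ Suc k + \<theta>) * s ^ Suc k + K * Pc n E (Suc r) y / s"
      unfolding s_def rk K_def using supersat_scaled[OF y0 _ th0, where n=n and E=E and k=k] by simp
    have tau0: "C / \<nu> > 0" using C1 nu0 by simp
    have Qle: "Pc n E (Suc r) y \<le> (C / \<nu>) ^ Suc (Suc k) * real (card (cliques n E (Suc r))) + (\<Sum>i<n. if y i > C / \<nu> then y i else 0) * s ^ Suc k"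
      unfolding s_def rk by (rule heavy_Q[OF tau0 y0])
    have cnt: "real (card (cliques n E (Suc r))) \<le> \<delta> * real n ^ Suc (Suc k)"
    proof -
      have "real (card (cliques n E (Suc r))) < \<delta> * real n ^ Suc r" using N0 nN0 hf by blast
      then show ?thesis unfolding rk by simp
    qed
    have hs: "(\<Sum>i<n. if y i > C / \<nu> then y i else 0) * (C / \<nu>) ^ k \<le> 1"
      using heavy_sum[OF y _ tau0] rk by simp
    have hs0: "(\<Sum>i<n. if y i > C / \<nu> then y i else 0) \<ge> 0" using y0 by (simp add: sum_nonneg)
    have main: "real (Suc k) * Pc n E r y \<le> (1 / real (Suc k) ^ k + real (Suc k) * \<theta> + real (Suc k) * K * (C ^ Suc (Suc k) * \<delta> * real (Suc k) + 1 / C)) * real n ^ k"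
      by (rule upper_arith[OF k npos nu0 nupow s0 sle Ple Psup Qle cnt hs hs0 C1 less_imp_le[OF K0] less_imp_le[OF d0] less_imp_le[OF th0]])
    have c1: "real (Suc k) * \<theta> = \<epsilon> / 3" unfolding \<theta>_def rk by (rule aux_c1) simp
    have c2: "real (Suc k) * K * (C ^ Suc (Suc k) * \<delta> * real (Suc k)) = \<epsilon> / 3"
      unfolding \<delta>_def rk by (rule aux_c2) (use K0 C1 in auto)
    have c3: "real (Suc k) * K * (1 / C) \<le> \<epsilon> / 3"
    proof -
      have "3 * real r * K / \<epsilon> \<le> C" unfolding C_def by simp
      then have "3 * real r * K \<le> C * \<epsilon>" using e by (simp add: divide_le_eq)
      then show ?thesis using C1 rk by (intro aux_c3) auto
    qed
    have "1 / real (Suc k) ^ k + real (Suc k) * \<theta> + real (Suc k) * K * (C ^ Suc (Suc k) * \<delta> * real (Suc k) + 1 / C)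
        \<le> 1 / real r ^ (r - 1) + \<epsilon>"
    proof -
      have dl: "real (Suc k) * K * (C ^ Suc (Suc k) * \<delta> * real (Suc k) + 1 / C) =
          real (Suc k) * K * (C ^ Suc (Suc k) * \<delta> * real (Suc k)) + real (Suc k) * K * (1 / C)"
        by (rule distrib_left)
      have "1 / real r ^ (r - 1) = 1 / real (Suc k) ^ k" using rk by simp
      then show ?thesis using c1 c2 c3 dl by linarith
    qed
    then have "(1 / real (Suc k) ^ k + real (Suc k) * \<theta> + real (Suc k) * K * (C ^ Suc (Suc k) * \<delta> * real (Suc k) + 1 / C)) * real n ^ k
        \<le> (1 / real r ^ (r - 1) + \<epsilon>) * real n ^ k" using npos by (simp add: mult_right_mono)
    then show "real r * Pc n E r y \<le> (1 / real r ^ (r - 1) + \<epsilon>) * real n ^ (r - 1)"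
      using main rk by simp
  qed
qed

definition turan :: "nat \<Rightarrow> nat \<Rightarrow> nat \<Rightarrow> nat \<Rightarrow> bool" where
  "turan r m u v \<longleftrightarrow> u < r * m \<and> v < r * m \<and> u mod r \<noteq> v mod r"

lemma turan_simple: "r * m \<le> n \<Longrightarrow> simple_graph {0..<n} (turan r m)"
  unfolding simple_graph_def turan_def by auto

lemma turan_Hfree:
  assumes ch: "chromatic_number VH EH = Suc r" and r: "r \<ge> 1"
  shows "H_free n (turan r m) VH EH"
  unfolding H_free_def
proof
  assume "contains_subgraph n (turan r m) VH EH"
  then obtain \<phi> where ph: "\<forall>u\<in>VH. \<forall>v\<in>VH. EH u v \<longrightarrow> turan r m (\<phi> u) (\<phi> v)"
    unfolding contains_subgraph_def by blast
  have "proper_colouring VH EH r (\<lambda>v. \<phi> v mod r)"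
    unfolding proper_colouring_def using ph r by (auto simp: turan_def)
  then have "chromatic_number VH EH \<le> r" unfolding chromatic_number_def by (intro Least_le) blast
  then show False using ch by simp
qed

lemma turan_cliques_card:
  assumes r: "r \<ge> 2" and n: "r * m \<le> n"
  shows "card (cliques n (turan r m) r) = m ^ r"
proof -
  define g where "g f = (\<lambda>c. r * f c + c) ` {0..<r}" for f :: "nat \<Rightarrow> nat"
  define P where "P = PiE {0..<r} (\<lambda>_. {0..<m})"
  have gmod: "(r * f c + c) mod r = c" if "c < r" for f c using that by simp
  have inj_r: "inj_on (\<lambda>c. r * f c + c) {0..<r}" for f
  proof (rule inj_onI)
    fix a b assume a: "a \<in> {0..<r}" and b: "b \<in> {0..<r}" and e: "r * f a + a = r * f b + b"
    have "a = (r * f a + a) mod r" using gmod a by simp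
    also have "\<dots> = (r * f b + b) mod r" using e by simp
    also have "\<dots> = b" using gmod b by simp
    finally show "a = b" .
  qed
  have lt: "r * f c + c < r * m" if "c < r" "f c < m" for f c
  proof -
    have "r * f c + c < r * f c + r" using that by simp
    also have "\<dots> = r * (f c + 1)" by simp
    also have "\<dots> \<le> r * m" using that by (intro mult_left_mono) auto
    finally show ?thesis .
  qed
  have inj: "inj_on g P"
  proof (rule inj_onI)
    fix f1 f2 assume f1: "f1 \<in> P" and f2: "f2 \<in> P" and eq: "g f1 = g f2"
    show "f1 = f2"
    proof (rule PiE_ext[OF f1[unfolded P_def] f2[unfolded P_def]])
      fix c assume c: "c \<in> {0..<r}"
      have "r * f1 c + c \<in> g f2" using eq c unfolding g_def by auto
      then obtain c' where c': "c' < r" "r * f1 c + c = r * f2 c' + c'" unfolding g_def by auto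
      have "c = (r * f1 c + c) mod r" using gmod c by simp
      also have "\<dots> = (r * f2 c' + c') mod r" using c' by simp
      also have "\<dots> = c'" using gmod c' by simp
      finally have "c = c'" .
      then show "f1 c = f2 c" using c' by simp
    qed
  qed
  have img: "g ` P = cliques n (turan r m) r"
  proof (intro set_eqI iffI)
    fix S assume "S \<in> g ` P"
    then obtain f where f: "f \<in> P" and S: "S = g f" by auto
    have fm: "\<And>c. c < r \<Longrightarrow> f c < m" using f unfolding P_def by auto
    show "S \<in> cliques n (turan r m) r"
      unfolding cliques_def is_clique_def
    proof (intro CollectI conjI ballI impI)
      show "S \<subseteq> {0..<n}" unfolding S g_def using lt fm n by fastforce
      show "card S = r" unfolding S g_def using card_image[OF inj_r] by simp
      fix u v assume "u \<in> S" "v \<in> S" "u \<noteq> v"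
      then obtain cu cv where "cu < r" "cv < r" "u = r * f cu + cu" "v = r * f cv + cv" unfolding S g_def by auto
      then show "turan r m u v" unfolding turan_def using lt fm \<open>u \<noteq> v\<close> gmod by auto
    qed
  next
    fix S assume S: "S \<in> cliques n (turan r m) r"
    then have Sn: "S \<subseteq> {0..<n}" and cS: "card S = r" and adj: "\<And>u v. u \<in> S \<Longrightarrow> v \<in> S \<Longrightarrow> u \<noteq> v \<Longrightarrow> turan r m u v"
      unfolding cliques_def is_clique_def by auto
    have fS: "finite S" using Sn by (auto intro: finite_subset)
    have Slt: "\<And>u. u \<in> S \<Longrightarrow> u < r * m"
    proof -
      fix u assume u: "u \<in> S"
      have "card (S - {u}) = card S - 1" using u fS by simp
      then have "card (S - {u}) \<ge> 1" using cS r by simp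
      then have "S - {u} \<noteq> {}" by (metis card.empty not_one_le_zero)
      then obtain v where "v \<in> S" "v \<noteq> u" by auto
      then show "u < r * m" using adj[OF u] unfolding turan_def by auto
    qed
    have injm: "inj_on (\<lambda>v. v mod r) S"
    proof (rule inj_onI)
      fix u v assume uv: "u \<in> S" "v \<in> S" "u mod r = v mod r"
      show "u = v"
      proof (rule ccontr)
        assume "u \<noteq> v"
        then have "turan r m u v" using adj uv by blast
        then show False using uv(3) unfolding turan_def by simp
      qed
    qed
    have imS: "(\<lambda>v. v mod r) ` S = {0..<r}"
    proof (rule card_subset_eq)
      show "(\<lambda>v. v mod r) ` S \<subseteq> {0..<r}" using r by auto
      show "card ((\<lambda>v. v mod r) ` S) = card {0..<r}" using card_image[OF injm] cS by simp
    qed simp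
    define f where "f c = (if c < r then (THE v. v \<in> S \<and> v mod r = c) div r else undefined)" for c
    have the_v: "(THE v. v \<in> S \<and> v mod r = c) \<in> S \<and> (THE v. v \<in> S \<and> v mod r = c) mod r = c" if c: "c < r" for c
    proof (rule theI')
      have "c \<in> (\<lambda>v. v mod r) ` S" using imS c by simp
      then obtain v where v: "v \<in> S" "v mod r = c" by blast
      have "\<And>w. w \<in> S \<and> w mod r = c \<Longrightarrow> w = v"
      proof -
        fix w assume "w \<in> S \<and> w mod r = c"
        then show "w = v" using inj_onD[OF injm, of w v] v by simp
      qed
      then show "\<exists>!v. v \<in> S \<and> v mod r = c" using v by blast
    qed
    have rec: "r * f c + c = (THE v. v \<in> S \<and> v mod r = c)" if c: "c < r" for c
    proof -
      define x where "x = (THE v. v \<in> S \<and> v mod r = c)"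
      have "x mod r = c" using the_v[OF c] unfolding x_def by simp
      moreover have "r * (x div r) + x mod r = x" by (rule mult_div_mod_eq)
      ultimately show ?thesis using c unfolding f_def x_def[symmetric] by simp
    qed
    have fP: "f \<in> P" unfolding P_def
    proof (rule PiE_I)
      fix c assume c: "c \<in> {0..<r}"
      have "(THE v. v \<in> S \<and> v mod r = c) < r * m" using Slt the_v c by auto
      then show "f c \<in> {0..<m}" using c unfolding f_def by (simp add: less_mult_imp_div_less mult.commute)
    qed (simp add: f_def)
    have "g f = S"
    proof (intro set_eqI iffI)
      fix v assume "v \<in> g f"
      then obtain c where "c < r" "v = r * f c + c" unfolding g_def by auto
      then show "v \<in> S" using rec the_v by auto
    next
      fix v assume v: "v \<in> S"
      define c where "c = v mod r"
      have c: "c < r" unfolding c_def using r by simp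
      have "(THE v. v \<in> S \<and> v mod r = c) = v"
        using inj_onD[OF injm, of "THE v. v \<in> S \<and> v mod r = c" v] the_v[OF c] v unfolding c_def by simp
      then show "v \<in> g f" unfolding g_def using rec[OF c] c by (intro image_eqI[of _ _ c]) auto
    qed
    then show "S \<in> g ` P" using fP by blast
  qed
  have "card (cliques n (turan r m) r) = card P" using card_image[OF inj] img by simp
  also have "\<dots> = m ^ r" unfolding P_def by (simp add: card_PiE)
  finally show ?thesis .
qed

lemma turan_clique_lt:
  assumes r: "r \<ge> 2" and S: "S \<in> cliques n (turan r m) r" and u: "u \<in> S"
  shows "u < r * m"
proof -
  have cS: "card S = r" and fS: "finite S" using S cliques_card cliques_fin by auto
  have "card (S - {u}) = card S - 1" using u fS by simp
  then have "card (S - {u}) \<ge> 1" using cS r by simp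
  then have "S - {u} \<noteq> {}" by (metis card.empty not_one_le_zero)
  then obtain v where v: "v \<in> S" "v \<noteq> u" by auto
  then have "turan r m u v" using S u unfolding cliques_def is_clique_def by auto
  then show ?thesis unfolding turan_def by simp
qed

lemma aux_am: "(a::real) > 0 \<Longrightarrow> b > 0 \<Longrightarrow> a * (b * c / (a * b)) = c"
  by (simp add: field_simps)

lemma turan_csr:
  assumes r: "r \<ge> 2" and m: "m \<ge> 1" and n: "r * m \<le> n"
  shows "real m ^ (r - 1) \<le> clique_spectral_radius n (turan r m) r"
proof -
  define a where "a i = (if i < r * m then 1 else (0::real))" for i
  have r1: "r \<ge> 1" using r by simp
  have a0: "\<And>i. a i \<ge> 0" unfolding a_def by simp
  have an: "\<And>i. n \<le> i \<Longrightarrow> a i = 0" unfolding a_def using n by simp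
  have sa: "(\<Sum>i<n. a i ^ r) = real (r * m)"
  proof -
    have "(\<Sum>i<n. a i ^ r) = (\<Sum>i<n. if i < r * m then 1 else 0)"
      by (rule sum.cong) (use r1 in \<open>auto simp: a_def\<close>)
    also have "\<dots> = real (card {i\<in>{..<n}. i < r * m})" by (rule card_filter_sum_real[symmetric]) simp
    also have "{i\<in>{..<n}. i < r * m} = {..<r * m}" using n by auto
    finally show ?thesis by simp
  qed
  have N: "(\<Sum>i<n. a i ^ r) > 0" using sa r m by simp
  have Pa: "Pc n (turan r m) r a = real (m ^ r)"
  proof -
    have "Pc n (turan r m) r a = (\<Sum>S\<in>cliques n (turan r m) r. 1)"
      unfolding Pc_def by (rule sum.cong[OF refl], rule prod.neutral) (auto simp: a_def dest: turan_clique_lt[OF r])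
    also have "\<dots> = real (m ^ r)" using turan_cliques_card[OF r n] by simp
    finally show ?thesis .
  qed
  note ns = normalize_Sph(1)[OF r1 a0 an N] normalize_Sph(2)[OF r1 a0 an N, of "turan r m"]
  have n1: "n \<ge> 1" using r m n by (metis le_trans mult_le_mono nat_mult_1 one_le_numeral)
  have "real r * Pc n (turan r m) r (\<lambda>i. inverse (root r (\<Sum>i<n. a i ^ r)) * a i) \<le> clique_spectral_radius n (turan r m) r"
    by (rule csr_lower[OF n1 r ns(1)])
  moreover have "real r * Pc n (turan r m) r (\<lambda>i. inverse (root r (\<Sum>i<n. a i ^ r)) * a i) = real m ^ (r - 1)"
  proof -
    have "real r * Pc n (turan r m) r (\<lambda>i. inverse (root r (\<Sum>i<n. a i ^ r)) * a i) = real r * (real (m ^ r) / real (r * m))"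
      using ns(2) Pa sa by simp
    also have "\<dots> = real m ^ (r - 1)"
    proof -
      obtain k where k: "r = Suc k" using r1 by (cases r) auto
      have e1: "real (m ^ r) / real (r * m) = real m * real m ^ k / (real r * real m)"
        unfolding k by (simp only: of_nat_power of_nat_mult power_Suc)
      have "real r * (real (m ^ r) / real (r * m)) = real r * (real m * real m ^ k / (real r * real m))"
        by (simp only: e1)
      also have "\<dots> = real m ^ k" by (rule aux_am) (use r m in auto)
      also have "\<dots> = real m ^ (r - 1)" using k by simp
      finally show ?thesis .
    qed
    finally show ?thesis .
  qed
  ultimately show ?thesis by simp
qed

lemma csr_bound:
  assumes n: "n \<ge> 1" and r: "r \<ge> 2"
  shows "clique_spectral_radius n E r \<le> real r * real n ^ (r - 1)"
proof (rule csr_upper[OF n r])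
  fix y assume y: "y \<in> Sph n r"
  have y0: "\<And>i. y i \<ge> 0" using y unfolding Sph_def by auto
  have "Pc n E r y \<le> (\<Sum>i<n. y i) ^ r" by (rule Pc_le_pow[OF y0])
  also have "\<dots> \<le> real n ^ (r - 1)" using Sph_sum_pow[OF y] r by simp
  finally show "real r * Pc n E r y \<le> real r * real n ^ (r - 1)" by (simp add: mult_left_mono)
qed

lemma exmu_set_bdd:
  assumes n: "n \<ge> 1" and r: "r \<ge> 2"
  shows "bdd_above {clique_spectral_radius n E r | E. simple_graph {0..<n} E \<and> H_free n E VH EH}"
  using csr_bound[OF n r] by (intro bdd_aboveI[of _ "real r * real n ^ (r - 1)"]) auto

lemma exmu_lower:
  assumes ch: "chromatic_number VH EH = Suc r" and r: "r \<ge> 2" and n: "n \<ge> r"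
  shows "real (n div r) ^ (r - 1) \<le> ex_mu r n VH EH"
proof -
  define m where "m = n div r"
  have "r div r \<le> n div r" by (rule div_le_mono[OF n])
  then have m: "m \<ge> 1" unfolding m_def using r by simp
  have rm: "r * m \<le> n" unfolding m_def by simp
  have n1: "n \<ge> 1" using n r by simp
  have "real m ^ (r - 1) \<le> clique_spectral_radius n (turan r m) r" by (rule turan_csr[OF r m rm])
  also have "\<dots> \<le> ex_mu r n VH EH"
    unfolding ex_mu_def
  proof (rule cSup_upper[OF _ exmu_set_bdd[OF n1 r]])
    show "clique_spectral_radius n (turan r m) r \<in> {clique_spectral_radius n E r | E. simple_graph {0..<n} E \<and> H_free n E VH EH}"
      using turan_simple[OF rm] turan_Hfree[OF ch] r by auto
  qed
  finally show ?thesis unfolding m_def .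
qed

lemma exmu_upper:
  assumes sg: "simple_graph VH EH" and ch: "chromatic_number VH EH = Suc r" and r: "r \<ge> 2" and e: "\<epsilon> > 0"
  shows "\<exists>N. \<forall>n\<ge>N. ex_mu r n VH EH \<le> (1 / real r ^ (r - 1) + \<epsilon>) * real n ^ (r - 1)"
proof -
  obtain N where N: "\<forall>n\<ge>N. \<forall>E. H_free n E VH EH \<longrightarrow>
           (\<forall>y\<in>Sph n r. real r * Pc n E r y \<le> (1 / real r ^ (r - 1) + \<epsilon>) * real n ^ (r - 1))"
    using upper_main[OF sg ch r e] by blast
  show ?thesis
  proof (intro exI[of _ "max N r"] allI impI)
    fix n assume nN: "max N r \<le> n"
    have n1: "n \<ge> 1" and nr: "n \<ge> r" and nN': "n \<ge> N" using nN r by auto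
    define m where "m = n div r"
    have rm: "r * m \<le> n" unfolding m_def by simp
    show "ex_mu r n VH EH \<le> (1 / real r ^ (r - 1) + \<epsilon>) * real n ^ (r - 1)"
      unfolding ex_mu_def
    proof (rule cSup_least)
      show "{clique_spectral_radius n E r | E. simple_graph {0..<n} E \<and> H_free n E VH EH} \<noteq> {}"
        using turan_simple[OF rm] turan_Hfree[OF ch, of n m] r by auto
    next
      fix x assume "x \<in> {clique_spectral_radius n E r | E. simple_graph {0..<n} E \<and> H_free n E VH EH}"
      then obtain E where x: "x = clique_spectral_radius n E r" and hf: "H_free n E VH EH" by auto
      show "x \<le> (1 / real r ^ (r - 1) + \<epsilon>) * real n ^ (r - 1)"
        unfolding x by (rule csr_upper[OF n1 r]) (use N nN' hf in blast)
    qed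
  qed
qed

lemma div_lower: assumes r: "r \<ge> 1" and n: "n \<ge> 1"
  shows "1 / real r - 1 / real n \<le> real (n div r) / real n"
proof -
  have "n = r * (n div r) + n mod r" by simp
  moreover have "n mod r < r" using r by simp
  ultimately have "real n < real r * (real (n div r) + 1)"
    by (metis add_less_cancel_left of_nat_add of_nat_less_iff of_nat_mult distrib_left mult.right_neutral)
  then have "real n / real r < real (n div r) + 1" using r by (simp add: field_simps)
  then have "real n / real r - 1 \<le> real (n div r)" by simp
  then have "(real n / real r - 1) / real n \<le> real (n div r) / real n" using n by (simp add: divide_right_mono)
  moreover have "(real n / real r - 1) / real n = 1 / real r - 1 / real n" using n r by (simp add: field_simps)
  ultimately show ?thesis by simp
qed

lemma aux_half: "x < (a::real) \<Longrightarrow> x + (a - x) / 2 < a" by (simp add: field_simps)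

theorem theorem3:
  fixes r :: nat and VH :: "'a set" and EH :: "'a \<Rightarrow> 'a \<Rightarrow> bool"
  assumes "r \<ge> 2"
    and "simple_graph VH EH"
    and "chromatic_number VH EH = r + 1"
  shows "(\<lambda>n. ex_mu r n VH EH / real n ^ (r - 1)) \<longlonglongrightarrow> 1 / real r ^ (r - 1)"
proof (rule order_tendstoI)
  have r: "r \<ge> 2" and sg: "simple_graph VH EH" and ch: "chromatic_number VH EH = Suc r" using assms by auto
  define L where "L = 1 / real r ^ (r - 1)"
  fix a assume a: "a < 1 / real r ^ (r - 1)"
  have lim: "(\<lambda>n. (1 / real r - 1 / real n) ^ (r - 1)) \<longlonglongrightarrow> (1 / real r - 0) ^ (r - 1)"
    by (intro tendsto_intros lim_1_over_n)
  then have "eventually (\<lambda>n. a < (1 / real r - 1 / real n) ^ (r - 1)) sequentially"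
    using a by (intro order_tendstoD(1)[OF lim]) (simp add: power_one_over)
  moreover have "eventually (\<lambda>n. n \<ge> r) sequentially" by (rule eventually_ge_at_top)
  ultimately show "eventually (\<lambda>n. a < ex_mu r n VH EH / real n ^ (r - 1)) sequentially"
  proof (rule eventually_elim2)
    fix n assume h: "a < (1 / real r - 1 / real n) ^ (r - 1)" and nr: "r \<le> n"
    have n1: "n \<ge> 1" using nr r by simp
    have "(1 / real r - 1 / real n) ^ (r - 1) \<le> (real (n div r) / real n) ^ (r - 1)"
    proof (rule power_mono)
      show "1 / real r - 1 / real n \<le> real (n div r) / real n" by (rule div_lower) (use r n1 in auto)
      show "0 \<le> 1 / real r - 1 / real n" using nr r by (simp add: frac_le)
    qed
    also have "\<dots> = real (n div r) ^ (r - 1) / real n ^ (r - 1)" by (simp add: power_divide)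
    also have "\<dots> \<le> ex_mu r n VH EH / real n ^ (r - 1)"
      using exmu_lower[OF ch r nr] n1 by (simp add: divide_right_mono)
    finally show "a < ex_mu r n VH EH / real n ^ (r - 1)" using h by simp
  qed
next
  have r: "r \<ge> 2" and sg: "simple_graph VH EH" and ch: "chromatic_number VH EH = Suc r" using assms by auto
  fix a assume a: "a > 1 / real r ^ (r - 1)"
  define \<epsilon> where "\<epsilon> = (a - 1 / real r ^ (r - 1)) / 2"
  have e: "\<epsilon> > 0" unfolding \<epsilon>_def using a by simp
  obtain N where N: "\<forall>n\<ge>N. ex_mu r n VH EH \<le> (1 / real r ^ (r - 1) + \<epsilon>) * real n ^ (r - 1)"
    using exmu_upper[OF sg ch r e] by blast
  have "eventually (\<lambda>n. n \<ge> max N 1) sequentially" by (rule eventually_ge_at_top)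
  then show "eventually (\<lambda>n. ex_mu r n VH EH / real n ^ (r - 1) < a) sequentially"
  proof (rule eventually_mono)
    fix n assume n: "max N 1 \<le> n"
    have np: "real n ^ (r - 1) > 0" using n by simp
    have "ex_mu r n VH EH / real n ^ (r - 1) \<le> 1 / real r ^ (r - 1) + \<epsilon>"
      using N n np by (simp add: divide_le_eq)
    also have "\<dots> < a" unfolding \<epsilon>_def using a by (rule aux_half)
    finally show "ex_mu r n VH EH / real n ^ (r - 1) < a" .
  qed
qed

end
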